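(* Let $\mathbf{A}=\mathcal{A}_1\parallel\cdots\parallel\mathcal{A}_n$ be a parallel composition of finite labelled transition systems. Every infinite chain $e_1<e_2<e_3<\cdots$ of events of a branching process of $\mathbf{A}$ contains a subchain $e_{i_1}\ll e_{i_2}\ll e_{i_3}\ll\cdots$ (with $i_1<i_2<\cdots$) in which consecutive events are related by the strong causal relation.
   Context: A labelled transition system (LTS) is $\mathcal{A}=(\Sigma,S,T,\lambda,s^0)$ with finite actions $\Sigma$, finite states $S$, $T\subseteq S\times S$, $\lambda:T\to\Sigma$, initial $s^0$. For $\mathcal{A}_j=(\Sigma_j,S_j,T_j,\lambda_j,s^0_j)$, the parallel composition has global states in $S_1\times\cdots\times S_n$, initial state $(s^0_1,\dots,s^0_n)$, and global transitions $\mathbf{t}=(t_1,\dots,t_n)\neq(\star,\dots,\star)$ with label $a$, where $t_j$ is an $a$-transition of $\mathcal{A}_j$ if $a\in\Sigma_j$ and $t_j=\star$ otherwise ($\mathcal{A}_j$ participates iff $t_j\ne\star$); ${}^\bullet\mathbf{t}$ / $\mathbf{t}^\bullet$ are the sets of source / target states of the $t_j\neq\star$. Branching processes of $\mathbf{A}$ are Petri nets with conditions labelled by local states and events labelled by global transitions, defined inductively: the net with conditions $b^0_1,\dots,b^0_n$ labelled $s^0_1,\dots,s^0_n$ and no events is one; if a reachable marking of a branching process contains a set $M$ of conditions labelled exactly by ${}^\bullet\mathbf{t}$ and there is no event labelled $\mathbf{t}$ with input set $M$, adding an event $e$ labelled $\mathbf{t}$ with inputs $M$ and a fresh output condition for each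 state of $\mathbf{t}^\bullet$ (labelled by it) gives a branching process; arbitrary branching processes are (countable) unions of such. For nodes $x,y$, $x<y$ means there is a nonempty directed arc path from $x$ to $y$. For an event $e$, $[e]=\{e':e'\le e\}$ and $M(e)$ is the marking (set of conditions) reached by firing exactly the events of $[e]$ from the initial marking. Event $e'$ is a strong cause of event $e$, written $e'\ll e$, if $e'<e$ and $b'<b$ for every $b\in M(e)\setminus M(e')$ and every $b'\in M(e')\setminus M(e)$. *)

theory Defs
  imports "HOL-Library.Countable_Set"
begin

text \<open>An LTS (Sigma, S, T, lambda, s0). Transitions are pairs of states; the labelling
  is a function on pairs, only relevant on T.\<close>
record ('a, 's) lts =
  sig  :: "'a set"
  st   :: "'s set"
  tr   :: "('s \<times> 's) set"
  lab  :: "'s \<times> 's \<Rightarrow> 'a"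
  init :: "'s"

definition is_lts :: "('a, 's) lts \<Rightarrow> bool" where
  "is_lts L \<longleftrightarrow> finite (sig L) \<and> finite (st L) \<and> tr L \<subseteq> st L \<times> st L
     \<and> lab L ` tr L \<subseteq> sig L \<and> init L \<in> st L"

text \<open>The system A_1 || ... || A_n is given by n and the components A j, j < n.
  A global transition is a tuple (t_0,...,t_{n-1}); None stands for the idle symbol star.\<close>
type_synonym 's gtrans = "nat \<Rightarrow> ('s \<times> 's) option"

definition gtrans_lab :: "(nat \<Rightarrow> ('a, 's) lts) \<Rightarrow> nat \<Rightarrow> 's gtrans \<Rightarrow> 'a \<Rightarrow> bool" where
  "gtrans_lab A n t a \<longleftrightarrow>
     (\<forall>j<n. (a \<in> sig (A j) \<longrightarrow> (\<exists>u. t j = Some u \<and> u \<in> tr (A j) \<and> lab (A j) u = a))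
          \<and> (a \<notin> sig (A j) \<longrightarrow> t j = None))
     \<and> (\<forall>j. n \<le> j \<longrightarrow> t j = None)
     \<and> (\<exists>j<n. t j \<noteq> None)"

definition is_gtrans :: "(nat \<Rightarrow> ('a, 's) lts) \<Rightarrow> nat \<Rightarrow> 's gtrans \<Rightarrow> bool" where
  "is_gtrans A n t \<longleftrightarrow> (\<exists>a. gtrans_lab A n t a)"

text \<open>Local states are tagged by their component index, so that the local state spaces
  of different components are disjoint.\<close>
definition pre_set :: "'s gtrans \<Rightarrow> (nat \<times> 's) set" where
  "pre_set t = {(j, fst u) | j u. t j = Some u}"

definition post_set :: "'s gtrans \<Rightarrow> (nat \<times> 's) set" where
  "post_set t = {(j, snd u) | j u. t j = Some u}"

record ('b, 'e, 's) net =
  conds  :: "'b set"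
  events :: "'e set"
  npre   :: "'e \<Rightarrow> 'b set"
  npost  :: "'e \<Rightarrow> 'b set"
  clab   :: "'b \<Rightarrow> nat \<times> 's"
  elab   :: "'e \<Rightarrow> 's gtrans"

definition agrees :: "('b, 'e, 's) net \<Rightarrow> ('b, 'e, 's) net \<Rightarrow> bool" where
  "agrees N N' \<longleftrightarrow>
     (\<forall>e\<in>events N. npre N' e = npre N e \<and> npost N' e = npost N e \<and> elab N' e = elab N e)
     \<and> (\<forall>b\<in>conds N. clab N' b = clab N b)"

definition subnet :: "('b, 'e, 's) net \<Rightarrow> ('b, 'e, 's) net \<Rightarrow> bool" where
  "subnet N N' \<longleftrightarrow> conds N \<subseteq> conds N' \<and> events N \<subseteq> events N' \<and> agrees N N'"

definition init_mark :: "('b, 'e, 's) net \<Rightarrow> 'b set" where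
  "init_mark N = {b \<in> conds N. \<forall>e\<in>events N. b \<notin> npost N e}"

fun fire_list :: "('b, 'e, 's) net \<Rightarrow> 'b set \<Rightarrow> 'e list \<Rightarrow> 'b set option" where
  "fire_list N K [] = Some K"
| "fire_list N K (e # es) =
     (if e \<in> events N \<and> npre N e \<subseteq> K
      then fire_list N ((K - npre N e) \<union> npost N e) es else None)"

definition reach_marks :: "('b, 'e, 's) net \<Rightarrow> 'b set set" where
  "reach_marks N = {K. \<exists>es. fire_list N (init_mark N) es = Some K}"

inductive fin_bp :: "(nat \<Rightarrow> ('a, 's) lts) \<Rightarrow> nat \<Rightarrow> ('b, 'e, 's) net \<Rightarrow> bool"
  for A n where
  base: "events N = {} \<Longrightarrow> bij_betw (clab N) (conds N) {(j, init (A j)) | j. j < n}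
           \<Longrightarrow> fin_bp A n N"
| extend: "\<lbrakk> fin_bp A n N; K \<in> reach_marks N; M \<subseteq> K; is_gtrans A n t;
             bij_betw (clab N) M (pre_set t);
             \<not> (\<exists>e'\<in>events N. elab N e' = t \<and> npre N e' = M);
             e \<notin> events N; Q \<inter> conds N = {};
             events N' = insert e (events N); conds N' = conds N \<union> Q;
             npre N' e = M; npost N' e = Q; elab N' e = t;
             bij_betw (clab N') Q (post_set t);
             agrees N N' \<rbrakk> \<Longrightarrow> fin_bp A n N'"

text \<open>Arbitrary branching processes: unions of countable directed families of
  (finitely generated) branching processes.\<close>
definition is_bp :: "(nat \<Rightarrow> ('a, 's) lts) \<Rightarrow> nat \<Rightarrow> ('b, 'e, 's) net \<Rightarrow> bool" where
  "is_bp A n N \<longleftrightarrow> (\<exists>F. countable F \<and> F \<noteq> {} \<and> (\<forall>N'\<in>F. fin_bp A n N')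
     \<and> (\<forall>N1\<in>F. \<forall>N2\<in>F. \<exists>N3\<in>F. subnet N1 N3 \<and> subnet N2 N3)
     \<and> conds N = (\<Union>N'\<in>F. conds N') \<and> events N = (\<Union>N'\<in>F. events N')
     \<and> (\<forall>N'\<in>F. agrees N' N))"

definition flow :: "('b, 'e, 's) net \<Rightarrow> ('b + 'e) rel" where
  "flow N = {(Inl b, Inr e) | b e. e \<in> events N \<and> b \<in> npre N e}
          \<union> {(Inr e, Inl b) | e b. e \<in> events N \<and> b \<in> npost N e}"

definition node_lt :: "('b, 'e, 's) net \<Rightarrow> ('b + 'e) \<Rightarrow> ('b + 'e) \<Rightarrow> bool" where
  "node_lt N x y \<longleftrightarrow> (x, y) \<in> (flow N)\<^sup>+"

definition ev_lt :: "('b, 'e, 's) net \<Rightarrow> 'e \<Rightarrow> 'e \<Rightarrow> bool" where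
  "ev_lt N e e' \<longleftrightarrow> node_lt N (Inr e) (Inr e')"

definition cond_lt :: "('b, 'e, 's) net \<Rightarrow> 'b \<Rightarrow> 'b \<Rightarrow> bool" where
  "cond_lt N b b' \<longleftrightarrow> node_lt N (Inl b) (Inl b')"

definition local_conf :: "('b, 'e, 's) net \<Rightarrow> 'e \<Rightarrow> 'e set" where
  "local_conf N e = {e' \<in> events N. e' = e \<or> ev_lt N e' e}"

definition Mark :: "('b, 'e, 's) net \<Rightarrow> 'e \<Rightarrow> 'b set" where
  "Mark N e = (THE K. \<exists>es. distinct es \<and> set es = local_conf N e
                         \<and> fire_list N (init_mark N) es = Some K)"

definition strong_cause :: "('b, 'e, 's) net \<Rightarrow> 'e \<Rightarrow> 'e \<Rightarrow> bool" where
  "strong_cause N e' e \<longleftrightarrow> ev_lt N e' e \<and>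
     (\<forall>b \<in> Mark N e - Mark N e'. \<forall>b' \<in> Mark N e' - Mark N e. cond_lt N b' b)"

end

theory Submission
  imports Defs
begin


definition Ev :: "('b, 'e, 's) net \<Rightarrow> ('e \<times> 'e) set" where
  "Ev N = {(x,y). x \<in> events N \<and> y \<in> events N \<and> npost N x \<inter> npre N y \<noteq> {}}"

lemma Ev_flow: "(x,y) \<in> (Ev N)\<^sup>+ \<Longrightarrow> (Inr x, Inr y) \<in> (flow N)\<^sup>+"
proof (induction rule: trancl_induct)
  case (base y)
  then obtain c where "c \<in> npost N x" "c \<in> npre N y" "x \<in> events N" "y \<in> events N"
    unfolding Ev_def by blast
  then have "(Inr x, Inl c) \<in> flow N" "(Inl c, Inr y) \<in> flow N" unfolding flow_def by blast+
  then show ?case by (rule trancl_into_trancl[OF r_into_trancl])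
next
  case (step y z)
  then obtain c where "c \<in> npost N y" "c \<in> npre N z" "y \<in> events N" "z \<in> events N"
    unfolding Ev_def by blast
  then have "(Inr y, Inl c) \<in> flow N" "(Inl c, Inr z) \<in> flow N" unfolding flow_def by blast+
  then show ?case by (rule trancl_into_trancl[OF trancl_into_trancl[OF step.IH]])
qed

lemma flow_Ev_aux:
  assumes "(a, b) \<in> (flow N)\<^sup>+"
  shows "(\<forall>x c. a = Inr x \<longrightarrow> b = Inl c \<longrightarrow> (\<exists>y. (x,y) \<in> (Ev N)\<^sup>* \<and> y \<in> events N \<and> c \<in> npost N y))
       \<and> (\<forall>x y. a = Inr x \<longrightarrow> b = Inr y \<longrightarrow> (x,y) \<in> (Ev N)\<^sup>+)"
  using assms
proof (induction rule: trancl_induct)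
  case (base b)
  show ?case
  proof (intro conjI allI impI)
    fix x c assume "a = Inr x" "b = Inl c"
    with base have "x \<in> events N \<and> c \<in> npost N x" unfolding flow_def by blast
    then show "\<exists>y. (x,y) \<in> (Ev N)\<^sup>* \<and> y \<in> events N \<and> c \<in> npost N y" by blast
  next
    fix x y assume "a = Inr x" "b = Inr y"
    with base have False unfolding flow_def by blast
    then show "(x,y) \<in> (Ev N)\<^sup>+" ..
  qed
next
  case (step b c')
  show ?case
  proof (intro conjI allI impI)
    fix x c assume a: "a = Inr x" and c: "c' = Inl c"
    from step.hyps(2) c obtain z where z: "b = Inr z" "z \<in> events N" "c \<in> npost N z"
      unfolding flow_def by blast
    from step.IH a z(1) have "(x,z) \<in> (Ev N)\<^sup>+" by blast
    then have "(x,z) \<in> (Ev N)\<^sup>*" by (rule trancl_into_rtrancl)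
    then show "\<exists>y. (x,y) \<in> (Ev N)\<^sup>* \<and> y \<in> events N \<and> c \<in> npost N y" using z by blast
  next
    fix x y assume a: "a = Inr x" and c: "c' = Inr y"
    from step.hyps(2) c obtain cc where z: "b = Inl cc" "y \<in> events N" "cc \<in> npre N y"
      unfolding flow_def by blast
    from step.IH a z(1) obtain z where zz: "(x,z) \<in> (Ev N)\<^sup>*" "z \<in> events N" "cc \<in> npost N z"
      by blast
    have "(z,y) \<in> Ev N" using z zz unfolding Ev_def by blast
    with zz(1) show "(x,y) \<in> (Ev N)\<^sup>+" by (rule rtrancl_into_trancl1)
  qed
qed

lemma ev_lt_Ev: "ev_lt N x y \<longleftrightarrow> (x,y) \<in> (Ev N)\<^sup>+"
  unfolding ev_lt_def node_lt_def
proof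
  assume "(Inr x, Inr y) \<in> (flow N)\<^sup>+"
  from flow_Ev_aux[OF this] show "(x,y) \<in> (Ev N)\<^sup>+" by simp
qed (rule Ev_flow)

lemma cond_lt_intro:
  assumes "b' \<in> npre N d" "d \<in> events N" "(d,p) \<in> (Ev N)\<^sup>*" "p \<in> events N" "b \<in> npost N p"
  shows "cond_lt N b' b"
proof -
  have 1: "(Inl b', Inr d) \<in> flow N" using assms unfolding flow_def by blast
  have 2: "(Inr p, Inl b) \<in> flow N" using assms unfolding flow_def by blast
  have "(Inr d, Inr p) \<in> (flow N)\<^sup>*"
  proof (cases "d = p")
    case False
    with assms(3) have "(d,p) \<in> (Ev N)\<^sup>+" by (simp add: rtrancl_eq_or_trancl)
    then show ?thesis by (intro trancl_into_rtrancl Ev_flow)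
  qed simp
  then have "(Inl b', Inr p) \<in> (flow N)\<^sup>+" by (rule rtrancl_into_trancl2[OF 1])
  then show ?thesis using 2 unfolding cond_lt_def node_lt_def by (rule trancl_into_trancl)
qed



definition compo :: "('b, 'e, 's) net \<Rightarrow> 'b \<Rightarrow> nat" where
  "compo N b = fst (clab N b)"

definition PostS :: "('b, 'e, 's) net \<Rightarrow> 'e set \<Rightarrow> 'b set" where
  "PostS N X = \<Union> (npost N ` X)"

definition PreS :: "('b, 'e, 's) net \<Rightarrow> 'e set \<Rightarrow> 'b set" where
  "PreS N X = \<Union> (npre N ` X)"

definition cutset :: "('b, 'e, 's) net \<Rightarrow> 'e set \<Rightarrow> 'b set" where
  "cutset N X = (init_mark N \<union> PostS N X) - PreS N X"

definition uprod :: "('b, 'e, 's) net \<Rightarrow> bool" where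
  "uprod N \<longleftrightarrow> (\<forall>x\<in>events N. \<forall>y\<in>events N. npost N x \<inter> npost N y \<noteq> {} \<longrightarrow> x = y)"

lemma fire_formula:
  assumes "fire_list N K es = Some K'" "distinct es" "set es \<subseteq> events N"
    "K \<inter> PostS N (set es) = {}" "uprod N"
  shows "K' = (K \<union> PostS N (set es)) - PreS N (set es)"
  using assms
proof (induction es arbitrary: K)
  case Nil
  then show ?case by (simp add: PostS_def PreS_def)
next
  case (Cons x rest)
  from Cons.prems(1) have x: "x \<in> events N" "npre N x \<subseteq> K"
    and f: "fire_list N ((K - npre N x) \<union> npost N x) rest = Some K'"
    by (auto split: if_splits)
  have d: "\<forall>y\<in>set rest. npost N x \<inter> npost N y = {}"
    using Cons.prems(2,3,5) unfolding uprod_def by auto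
  have "((K - npre N x) \<union> npost N x) \<inter> PostS N (set rest) = {}"
    using d Cons.prems(4) unfolding PostS_def by auto
  then have IH: "K' = (((K - npre N x) \<union> npost N x) \<union> PostS N (set rest)) - PreS N (set rest)"
    using Cons.IH[OF f] Cons.prems by auto
  have "K \<inter> (npost N x \<union> PostS N (set rest)) = {}"
    using Cons.prems(4) unfolding PostS_def by auto
  then show ?case unfolding IH using x(2) unfolding PostS_def PreS_def by auto
qed

lemma fire_exists:
  assumes "distinct es" "set es \<subseteq> events N"
    "K \<inter> PostS N (set es) = {}" "uprod N"
    "\<forall>i<length es. npre N (es!i) \<subseteq> K \<union> PostS N (set (take i es))"
    "\<forall>x\<in>set es. \<forall>y\<in>set es. x \<noteq> y \<longrightarrow> npre N x \<inter> npre N y = {}"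
  shows "fire_list N K es = Some ((K \<union> PostS N (set es)) - PreS N (set es))"
  using assms
proof (induction es arbitrary: K)
  case Nil
  then show ?case by (simp add: PostS_def PreS_def)
next
  case (Cons x rest)
  have x: "x \<in> events N" using Cons.prems(2) by simp
  have px: "npre N x \<subseteq> K" using Cons.prems(5)[rule_format, of 0] by (simp add: PostS_def)
  define K1 where "K1 = (K - npre N x) \<union> npost N x"
  have d: "\<forall>y\<in>set rest. npost N x \<inter> npost N y = {}"
    using Cons.prems(1,2,4) unfolding uprod_def by auto
  have a3: "K1 \<inter> PostS N (set rest) = {}"
    using d Cons.prems(3) unfolding PostS_def K1_def by auto
  have a5: "\<forall>i<length rest. npre N (rest!i) \<subseteq> K1 \<union> PostS N (set (take i rest))"
  proof (intro allI impI)
    fix i assume i: "i < length rest"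
    have "npre N ((x#rest)!(Suc i)) \<subseteq> K \<union> PostS N (set (take (Suc i) (x#rest)))"
      using Cons.prems(5)[rule_format, of "Suc i"] i by simp
    then have 1: "npre N (rest!i) \<subseteq> K \<union> npost N x \<union> PostS N (set (take i rest))"
      by (auto simp: PostS_def)
    have "rest!i \<in> set rest" using i by simp
    then have "rest!i \<noteq> x" using Cons.prems(1) by auto
    then have "npre N (rest!i) \<inter> npre N x = {}"
      using Cons.prems(6) \<open>rest!i \<in> set rest\<close> by auto
    then show "npre N (rest!i) \<subseteq> K1 \<union> PostS N (set (take i rest))"
      using 1 unfolding K1_def by blast
  qed
  have IH: "fire_list N K1 rest = Some ((K1 \<union> PostS N (set rest)) - PreS N (set rest))"
    using Cons.IH[OF _ _ a3 _ a5] Cons.prems by auto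
  have "K \<inter> (npost N x \<union> PostS N (set rest)) = {}"
    using Cons.prems(3) unfolding PostS_def by auto
  then have eq: "(K1 \<union> PostS N (set rest)) - PreS N (set rest)
      = (K \<union> PostS N (set (x#rest))) - PreS N (set (x#rest))"
    unfolding K1_def using px unfolding PostS_def PreS_def by auto
  show ?case using x px IH eq K1_def by simp
qed

lemma fire_inj:
  assumes "fire_list N K es = Some K'" "inj_on (compo N) K"
    "\<forall>e\<in>events N. inj_on (compo N) (npost N e) \<and> compo N ` npre N e = compo N ` npost N e"
  shows "inj_on (compo N) K'"
  using assms
proof (induction es arbitrary: K)
  case Nil
  then show ?case by simp
next
  case (Cons x rest)
  from Cons.prems(1) have x: "x \<in> events N" "npre N x \<subseteq> K"
    and f: "fire_list N ((K - npre N x) \<union> npost N x) rest = Some K'"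
    by (auto split: if_splits)
  have "inj_on (compo N) ((K - npre N x) \<union> npost N x)"
  proof (rule inj_onI)
    fix b1 b2 assume b1: "b1 \<in> (K - npre N x) \<union> npost N x" and b2: "b2 \<in> (K - npre N x) \<union> npost N x"
      and eq: "compo N b1 = compo N b2"
    have ip: "inj_on (compo N) (npost N x)" and cc: "compo N ` npre N x = compo N ` npost N x"
      using Cons.prems(3) x by auto
    have cross: False if h: "c1 \<in> K - npre N x" "c2 \<in> npost N x" "compo N c1 = compo N c2" for c1 c2
    proof -
      have "compo N c2 \<in> compo N ` npre N x" using cc h(2) by auto
      then obtain c3 where "c3 \<in> npre N x" "compo N c3 = compo N c1" using h(3) by auto
      then have "c3 = c1" using Cons.prems(2) x(2) h(1) by (auto dest: inj_onD)
      then show False using h(1) \<open>c3 \<in> npre N x\<close> by auto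
    qed
    show "b1 = b2"
    proof (cases "b1 \<in> npost N x")
      case True
      show ?thesis
      proof (cases "b2 \<in> npost N x")
        case True
        then show ?thesis using \<open>b1 \<in> npost N x\<close> ip eq by (auto dest: inj_onD)
      next
        case False
        then show ?thesis using cross[of b2 b1] b2 \<open>b1 \<in> npost N x\<close> eq by auto
      qed
    next
      case False
      show ?thesis
      proof (cases "b2 \<in> npost N x")
        case True
        then show ?thesis using cross[of b1 b2] b1 False eq by auto
      next
        case False
        then show ?thesis using \<open>b1 \<notin> npost N x\<close> b1 b2 Cons.prems(2) eq by (auto dest: inj_onD)
      qed
    qed
  qed
  then show ?case using Cons.IH[OF f] Cons.prems(3) by blast
qed



definition good :: "nat \<Rightarrow> ('b, 'e, 's) net \<Rightarrow> bool" where
  "good n N \<longleftrightarrow>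
   (\<forall>e\<in>events N. npre N e \<subseteq> conds N \<and> npost N e \<subseteq> conds N \<and> npre N e \<noteq> {}
      \<and> inj_on (compo N) (npre N e) \<and> inj_on (compo N) (npost N e)
      \<and> compo N ` npre N e = compo N ` npost N e)
   \<and> uprod N
   \<and> (\<forall>b\<in>conds N. compo N b < n)
   \<and> inj_on (compo N) (init_mark N)
   \<and> (\<forall>x. (x,x) \<notin> (Ev N)\<^sup>+)
   \<and> (\<forall>e\<in>events N. \<forall>x\<in>local_conf N e. \<forall>y\<in>local_conf N e. x \<noteq> y \<longrightarrow> npre N x \<inter> npre N y = {})"

definition dclosed :: "('b, 'e, 's) net \<Rightarrow> 'e set \<Rightarrow> bool" where
  "dclosed N X \<longleftrightarrow> X \<subseteq> events N \<and> (\<forall>y\<in>X. \<forall>x. (x,y) \<in> Ev N \<longrightarrow> x \<in> X)"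

definition cfree :: "('b, 'e, 's) net \<Rightarrow> 'e set \<Rightarrow> bool" where
  "cfree N X \<longleftrightarrow> (\<forall>x\<in>X. \<forall>y\<in>X. x \<noteq> y \<longrightarrow> npre N x \<inter> npre N y = {})"

lemma Ev_events: "(x,y) \<in> Ev N \<Longrightarrow> x \<in> events N \<and> y \<in> events N"
  unfolding Ev_def by blast

lemma Ev_trancl_events: "(x,y) \<in> (Ev N)\<^sup>+ \<Longrightarrow> x \<in> events N \<and> y \<in> events N"
  by (induction rule: trancl_induct) (auto dest: Ev_events)

lemma topo:
  assumes "finite X" "dclosed N X" "\<forall>x. (x,x) \<notin> (Ev N)\<^sup>+"
  shows "\<exists>es. distinct es \<and> set es = X \<and> (\<forall>i<length es. \<forall>x. (x, es!i) \<in> Ev N \<longrightarrow> x \<in> set (take i es))"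
  using assms(1,2)
proof (induction X rule: finite_remove_induct)
  case empty
  then show ?case by simp
next
  case (remove A)
  define R where "R = {(a,b). a \<in> A \<and> b \<in> A \<and> (b,a) \<in> Ev N}"
  have "R \<subseteq> A \<times> A" unfolding R_def by auto
  then have fR: "finite R" using remove.hyps(1) by (meson finite_SigmaI finite_subset)
  have "R \<subseteq> (Ev N)\<inverse>" unfolding R_def by auto
  moreover have "acyclic ((Ev N)\<inverse>)" using assms(3) by (simp add: acyclic_def trancl_converse)
  ultimately have "acyclic R" by (rule acyclic_subset[rotated])
  with fR have "wf R" by (rule finite_acyclic_wf)
  then obtain m where m: "m \<in> A" "\<And>y. (y,m) \<in> R \<Longrightarrow> y \<notin> A"
    using remove.hyps(2) by (meson ex_in_conv wfE_min)
  have mmax: "\<not> (\<exists>y\<in>A. (m,y) \<in> Ev N)" using m unfolding R_def by blast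
  have "dclosed N (A - {m})"
    using remove.prems mmax unfolding dclosed_def by blast
  then obtain es where es: "distinct es" "set es = A - {m}"
    "\<forall>i<length es. \<forall>x. (x, es!i) \<in> Ev N \<longrightarrow> x \<in> set (take i es)"
    using remove.IH[OF m(1)] by blast
  have "(m,m) \<notin> Ev N" using assms(3) by blast
  show ?case
  proof (intro exI conjI)
    show "distinct (es @ [m])" using es by simp
    show "set (es @ [m]) = A" using es m by auto
    show "\<forall>i<length (es @ [m]). \<forall>x. (x, (es @ [m])!i) \<in> Ev N \<longrightarrow> x \<in> set (take i (es @ [m]))"
    proof (intro allI impI)
      fix i x assume i: "i < length (es @ [m])" and xe: "(x, (es @ [m])!i) \<in> Ev N"
      show "x \<in> set (take i (es @ [m]))"
      proof (cases "i < length es")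
        case True
        then show ?thesis using es(3) xe by (simp add: nth_append)
      next
        case False
        then have "i = length es" using i by simp
        then have "(x, m) \<in> Ev N" using xe by simp
        moreover then have "x \<in> A" using remove.prems m(1) unfolding dclosed_def by blast
        ultimately show ?thesis using \<open>i = length es\<close> es(2) \<open>(m,m) \<notin> Ev N\<close> by auto
      qed
    qed
  qed
qed

lemma good_D:
  assumes "good n N"
  shows "\<And>e. e \<in> events N \<Longrightarrow> npre N e \<subseteq> conds N"
    "\<And>e. e \<in> events N \<Longrightarrow> npost N e \<subseteq> conds N"
    "\<And>e. e \<in> events N \<Longrightarrow> npre N e \<noteq> {}"
    "\<And>e. e \<in> events N \<Longrightarrow> inj_on (compo N) (npre N e)"
    "\<And>e. e \<in> events N \<Longrightarrow> inj_on (compo N) (npost N e)"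
    "\<And>e. e \<in> events N \<Longrightarrow> compo N ` npre N e = compo N ` npost N e"
    "uprod N" "\<And>b. b \<in> conds N \<Longrightarrow> compo N b < n" "inj_on (compo N) (init_mark N)"
    "\<And>x. (x,x) \<notin> (Ev N)\<^sup>+"
    "\<And>e. e \<in> events N \<Longrightarrow> cfree N (local_conf N e)"
  using assms unfolding good_def cfree_def by blast+

lemma cut_fire:
  assumes g: "good n N" and X: "finite X" "dclosed N X" "cfree N X"
  shows "\<exists>es. distinct es \<and> set es = X \<and> fire_list N (init_mark N) es = Some (cutset N X)"
proof -
  obtain es where es: "distinct es" "set es = X"
    "\<forall>i<length es. \<forall>x. (x, es!i) \<in> Ev N \<longrightarrow> x \<in> set (take i es)"
    using topo[OF X(1,2)] good_D(10)[OF g] by blast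
  have Xe: "X \<subseteq> events N" using X(2) unfolding dclosed_def by simp
  have a3: "init_mark N \<inter> PostS N (set es) = {}"
    using Xe es(2) unfolding init_mark_def PostS_def by blast
  have a5: "\<forall>i<length es. npre N (es!i) \<subseteq> init_mark N \<union> PostS N (set (take i es))"
  proof (intro allI impI subsetI)
    fix i b assume i: "i < length es" and b: "b \<in> npre N (es!i)"
    have ei: "es!i \<in> events N" using i es(2) Xe by auto
    show "b \<in> init_mark N \<union> PostS N (set (take i es))"
    proof (cases "\<exists>y\<in>events N. b \<in> npost N y")
      case True
      then obtain y where y: "y \<in> events N" "b \<in> npost N y" by blast
      then have "(y, es!i) \<in> Ev N" using ei b unfolding Ev_def by blast
      then have "y \<in> set (take i es)" using es(3) i by blast
      then show ?thesis using y unfolding PostS_def by blast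
    next
      case False
      then show ?thesis using good_D(1)[OF g ei] b unfolding init_mark_def by blast
    qed
  qed
  have "fire_list N (init_mark N) es = Some ((init_mark N \<union> PostS N (set es)) - PreS N (set es))"
    using fire_exists[OF es(1) _ a3 good_D(7)[OF g] a5] es(2) Xe X(3) unfolding cfree_def by blast
  then show ?thesis using es unfolding cutset_def by blast
qed

lemma cut_inj:
  assumes g: "good n N" and X: "finite X" "dclosed N X" "cfree N X"
  shows "inj_on (compo N) (cutset N X)"
proof -
  obtain es where "fire_list N (init_mark N) es = Some (cutset N X)"
    using cut_fire[OF assms] by blast
  then show ?thesis
    using fire_inj[of N "init_mark N" es] good_D(5,6,9)[OF g] by blast
qed

lemma local_conf_dclosed: "dclosed N (local_conf N e)"
  unfolding dclosed_def local_conf_def ev_lt_Ev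
  by (auto dest: Ev_events intro: trancl_into_trancl2)

lemma Mark_eq:
  assumes g: "good n N" and e: "e \<in> events N" and fin: "finite (local_conf N e)"
  shows "Mark N e = cutset N (local_conf N e)"
proof -
  let ?X = "local_conf N e"
  obtain es where es: "distinct es" "set es = ?X" "fire_list N (init_mark N) es = Some (cutset N ?X)"
    using cut_fire[OF g fin local_conf_dclosed good_D(11)[OF g e]] by blast
  have Xe: "?X \<subseteq> events N" unfolding local_conf_def by blast
  show ?thesis unfolding Mark_def
  proof (rule the_equality)
    show "\<exists>es. distinct es \<and> set es = ?X \<and> fire_list N (init_mark N) es = Some (cutset N ?X)"
      using es by blast
  next
    fix K assume "\<exists>es. distinct es \<and> set es = ?X \<and> fire_list N (init_mark N) es = Some K"
    then obtain es' where es': "distinct es'" "set es' = ?X" "fire_list N (init_mark N) es' = Some K"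
      by blast
    have a3: "init_mark N \<inter> PostS N (set es') = {}"
      using Xe es'(2) unfolding init_mark_def PostS_def by blast
    show "K = cutset N ?X"
      using fire_formula[OF es'(3,1) _ a3 good_D(7)[OF g]] es'(2) Xe unfolding cutset_def by simp
  qed
qed

lemma Mark_inf:
  assumes "infinite (local_conf N e)"
  shows "Mark N e = (THE K. False)"
proof -
  have "(\<lambda>K. \<exists>es. distinct es \<and> set es = local_conf N e \<and> fire_list N (init_mark N) es = Some K) = (\<lambda>K. False)"
  proof (rule ext)
    fix K
    have "finite (local_conf N e)" if "set es = local_conf N e" for es
      using that by (metis List.finite_set)
    then show "(\<exists>es. distinct es \<and> set es = local_conf N e \<and> fire_list N (init_mark N) es = Some K) = False"
      using assms by blast
  qed
  then show ?thesis unfolding Mark_def by simp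
qed



lemma lc_events: "local_conf N e \<subseteq> events N"
  unfolding local_conf_def by blast

lemma lc_self: "e \<in> events N \<Longrightarrow> e \<in> local_conf N e"
  unfolding local_conf_def by blast

lemma lc_mem: "x \<in> local_conf N e \<longleftrightarrow> x \<in> events N \<and> (x = e \<or> (x,e) \<in> (Ev N)\<^sup>+)"
  unfolding local_conf_def ev_lt_Ev by blast

lemma lc_mono:
  assumes "x \<in> local_conf N e" shows "local_conf N x \<subseteq> local_conf N e"
proof
  fix w assume "w \<in> local_conf N x"
  then show "w \<in> local_conf N e" using assms by (auto simp: lc_mem intro: trancl_trans)
qed

lemma lc_mono2: "(x,e) \<in> (Ev N)\<^sup>+ \<Longrightarrow> local_conf N x \<subseteq> local_conf N e"
  by (rule lc_mono) (auto simp: lc_mem dest: Ev_trancl_events)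

lemma pre_in_cut:
  assumes g: "good n N" and e: "e \<in> events N"
    and Y: "Y \<subseteq> local_conf N e" and x: "x \<in> local_conf N e" "x \<notin> Y"
    and sub: "local_conf N x - {x} \<subseteq> Y"
  shows "npre N x \<subseteq> cutset N Y"
proof
  fix b assume b: "b \<in> npre N x"
  have xe: "x \<in> events N" using x(1) lc_events[of N e] by blast
  have "b \<in> init_mark N \<union> PostS N Y"
  proof (cases "\<exists>w\<in>events N. b \<in> npost N w")
    case True
    then obtain w where w: "w \<in> events N" "b \<in> npost N w" by blast
    then have "(w,x) \<in> Ev N" using b xe unfolding Ev_def by blast
    then have "w \<in> local_conf N x" "w \<noteq> x" using w good_D(10)[OF g] unfolding lc_mem by auto
    then have "w \<in> Y" using sub by blast
    then show ?thesis using w unfolding PostS_def by blast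
  next
    case False
    then show ?thesis using good_D(1)[OF g xe] b unfolding init_mark_def by blast
  qed
  moreover have "b \<notin> PreS N Y"
  proof
    assume "b \<in> PreS N Y"
    then obtain w where "w \<in> Y" "b \<in> npre N w" unfolding PreS_def by blast
    moreover have "w \<noteq> x" using \<open>w \<in> Y\<close> x(2) by blast
    ultimately show False using good_D(11)[OF g e] Y x(1) b unfolding cfree_def by blast
  qed
  ultimately show "b \<in> cutset N Y" unfolding cutset_def by blast
qed



lemma cfree_sub: "cfree N X \<Longrightarrow> Y \<subseteq> X \<Longrightarrow> cfree N Y"
  unfolding cfree_def by blast

lemma chain_comp:
  assumes g: "good n N" and e: "e \<in> events N" and fin: "finite (local_conf N e)"
    and x: "x \<in> local_conf N e" and y: "y \<in> local_conf N e"
    and jx: "j \<in> compo N ` npre N x" and jy: "j \<in> compo N ` npre N y"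
  shows "x = y \<or> (x,y) \<in> (Ev N)\<^sup>+ \<or> (y,x) \<in> (Ev N)\<^sup>+"
proof (rule ccontr)
  assume nc: "\<not> (x = y \<or> (x,y) \<in> (Ev N)\<^sup>+ \<or> (y,x) \<in> (Ev N)\<^sup>+)"
  have acyc: "\<And>z. (z,z) \<notin> (Ev N)\<^sup>+" by (rule good_D(10)[OF g])
  define Y where "Y = (local_conf N x \<union> local_conf N y) - {x,y}"
  have lx: "local_conf N x \<subseteq> local_conf N e" by (rule lc_mono[OF x])
  have ly: "local_conf N y \<subseteq> local_conf N e" by (rule lc_mono[OF y])
  have YE: "Y \<subseteq> local_conf N e" unfolding Y_def using lx ly by blast
  have finY: "finite Y" using YE fin by (rule finite_subset)
  have dY: "dclosed N Y"
    unfolding dclosed_def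
  proof (intro conjI ballI allI impI)
    show "Y \<subseteq> events N" using YE lc_events[of N e] by blast
  next
    fix w v assume w: "w \<in> Y" and vw: "(v,w) \<in> Ev N"
    have "v \<in> local_conf N x \<union> local_conf N y"
      using w vw local_conf_dclosed[of N x] local_conf_dclosed[of N y] unfolding Y_def dclosed_def
      by blast
    moreover have "v \<noteq> x"
    proof
      assume "v = x"
      have "w \<in> local_conf N x - {x} \<or> w \<in> local_conf N y - {y}" using w unfolding Y_def by blast
      then show False
      proof
        assume "w \<in> local_conf N x - {x}"
        then have "(w,x) \<in> (Ev N)\<^sup>+" by (auto simp: lc_mem)
        then have "(v,x) \<in> (Ev N)\<^sup>+" by (rule trancl_into_trancl2[OF vw])
        then show False using \<open>v = x\<close> acyc by simp
      next
        assume "w \<in> local_conf N y - {y}"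
        then have "(w,y) \<in> (Ev N)\<^sup>+" by (auto simp: lc_mem)
        then have "(v,y) \<in> (Ev N)\<^sup>+" by (rule trancl_into_trancl2[OF vw])
        then show False using \<open>v = x\<close> nc by simp
      qed
    qed
    moreover have "v \<noteq> y"
    proof
      assume "v = y"
      have "w \<in> local_conf N x - {x} \<or> w \<in> local_conf N y - {y}" using w unfolding Y_def by blast
      then show False
      proof
        assume "w \<in> local_conf N x - {x}"
        then have "(w,x) \<in> (Ev N)\<^sup>+" by (auto simp: lc_mem)
        then have "(v,x) \<in> (Ev N)\<^sup>+" by (rule trancl_into_trancl2[OF vw])
        then show False using \<open>v = y\<close> nc by simp
      next
        assume "w \<in> local_conf N y - {y}"
        then have "(w,y) \<in> (Ev N)\<^sup>+" by (auto simp: lc_mem)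
        then have "(v,y) \<in> (Ev N)\<^sup>+" by (rule trancl_into_trancl2[OF vw])
        then show False using \<open>v = y\<close> acyc by simp
      qed
    qed
    ultimately show "v \<in> Y" unfolding Y_def by blast
  qed
  have cY: "cfree N Y" using good_D(11)[OF g e] YE by (rule cfree_sub)
  have inj: "inj_on (compo N) (cutset N Y)" by (rule cut_inj[OF g finY dY cY])
  have xnY: "x \<notin> Y" "y \<notin> Y" unfolding Y_def by auto
  have subx: "local_conf N x - {x} \<subseteq> Y"
  proof
    fix w assume w: "w \<in> local_conf N x - {x}"
    have "w \<noteq> y" using w nc by (auto simp: lc_mem)
    then show "w \<in> Y" using w unfolding Y_def by blast
  qed
  have suby: "local_conf N y - {y} \<subseteq> Y"
  proof
    fix w assume w: "w \<in> local_conf N y - {y}"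
    have "w \<noteq> x" using w nc by (auto simp: lc_mem)
    then show "w \<in> Y" using w unfolding Y_def by blast
  qed
  have px: "npre N x \<subseteq> cutset N Y" by (rule pre_in_cut[OF g e YE x xnY(1) subx])
  have py: "npre N y \<subseteq> cutset N Y" by (rule pre_in_cut[OF g e YE y xnY(2) suby])
  obtain bx where bx: "bx \<in> npre N x" "compo N bx = j" using jx by blast
  obtain by' where by': "by' \<in> npre N y" "compo N by' = j" using jy by blast
  have "bx = by'" using inj px py bx by' by (auto dest: inj_onD)
  moreover have "npre N x \<inter> npre N y = {}"
    using good_D(11)[OF g e] x y nc unfolding cfree_def by blast
  ultimately show False using bx by' by blast
qed

lemma last_comp:
  assumes g: "good n N" and e: "e \<in> events N" and fin: "finite (local_conf N e)"
    and z: "z \<in> local_conf N e" and pz: "(p,z) \<in> (Ev N)\<^sup>+"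
    and b: "b \<in> npost N p" and bz: "compo N b \<in> compo N ` npre N z"
    and nb: "b \<notin> PreS N (local_conf N e)"
  shows False
proof -
  have acyc: "\<And>w. (w,w) \<notin> (Ev N)\<^sup>+" by (rule good_D(10)[OF g])
  define Y where "Y = local_conf N z - {z}"
  have lz: "local_conf N z \<subseteq> local_conf N e" by (rule lc_mono[OF z])
  have YE: "Y \<subseteq> local_conf N e" unfolding Y_def using lz by blast
  have finY: "finite Y" using YE fin by (rule finite_subset)
  have dY: "dclosed N Y"
    unfolding dclosed_def
  proof (intro conjI ballI allI impI)
    show "Y \<subseteq> events N" using YE lc_events[of N e] by blast
  next
    fix w v assume w: "w \<in> Y" and vw: "(v,w) \<in> Ev N"
    have "v \<in> local_conf N z"
      using w vw local_conf_dclosed[of N z] unfolding Y_def dclosed_def by blast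
    moreover have "v \<noteq> z"
    proof
      assume "v = z"
      have "(w,z) \<in> (Ev N)\<^sup>+" using w by (auto simp: Y_def lc_mem)
      then have "(v,z) \<in> (Ev N)\<^sup>+" by (rule trancl_into_trancl2[OF vw])
      then show False using \<open>v = z\<close> acyc by simp
    qed
    ultimately show "v \<in> Y" unfolding Y_def by blast
  qed
  have cY: "cfree N Y" using good_D(11)[OF g e] YE by (rule cfree_sub)
  have inj: "inj_on (compo N) (cutset N Y)" by (rule cut_inj[OF g finY dY cY])
  have pzz: "npre N z \<subseteq> cutset N Y" by (rule pre_in_cut[OF g e YE z]) (auto simp: Y_def)
  have pe: "p \<in> events N" using pz by (auto dest: Ev_trancl_events)
  have "p \<in> Y" using pz pe acyc by (auto simp: Y_def lc_mem)
  then have "b \<in> PostS N Y" using b unfolding PostS_def by blast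
  moreover have "b \<notin> PreS N Y" using nb YE unfolding PreS_def by blast
  ultimately have bY: "b \<in> cutset N Y" unfolding cutset_def by blast
  obtain bz' where bz': "bz' \<in> npre N z" "compo N bz' = compo N b" using bz by auto
  then have "bz' = b" using inj pzz bY by (auto dest: inj_onD)
  then have "b \<in> PreS N (local_conf N e)" using bz' z unfolding PreS_def by blast
  then show False using nb by blast
qed



lemma subsingleton_finite: "(\<forall>x\<in>A. \<forall>y\<in>A. x = y) \<Longrightarrow> finite A"
proof (cases "A = {}")
  case False
  then obtain a where "a \<in> A" by blast
  moreover assume "\<forall>x\<in>A. \<forall>y\<in>A. x = y"
  ultimately have "A = {a}" by blast
  then show ?thesis by simp
qed simp

locale chainctx =
  fixes n :: nat and N :: "('b, 'e, 's) net" and f :: "nat \<Rightarrow> 'e"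
  assumes g: "good n N" and fe: "\<forall>i. f i \<in> events N"
    and ch: "\<forall>i. (f i, f (Suc i)) \<in> (Ev N)\<^sup>+"
    and fin: "\<forall>i. finite (local_conf N (f i))"
begin

definition X :: "nat \<Rightarrow> 'e set" where "X i = local_conf N (f i)"
definition C :: "'e set" where "C = (\<Union>i. X i)"

lemma chain_lt: "i < k \<Longrightarrow> (f i, f k) \<in> (Ev N)\<^sup>+"
proof (induction k)
  case 0 then show ?case by simp
next
  case (Suc k)
  show ?case
  proof (cases "i = k")
    case True then show ?thesis using ch by simp
  next
    case False
    then have "(f i, f k) \<in> (Ev N)\<^sup>+" using Suc by simp
    then show ?thesis using ch by (meson trancl_trans)
  qed
qed

lemma X_mono: "i \<le> k \<Longrightarrow> X i \<subseteq> X k"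
  unfolding X_def using chain_lt lc_mono2 by (metis order.order_iff_strict order_refl)

lemma X_events: "X i \<subseteq> events N" unfolding X_def by (rule lc_events)

lemma f_in_X: "f i \<in> X i" unfolding X_def using fe lc_self by metis

lemma X_fin: "finite (X i)" unfolding X_def using fin by blast

lemma C_events: "C \<subseteq> events N" unfolding C_def using X_events by blast

lemma pick_X:
  assumes "finite H" "\<forall>h\<in>H. \<exists>z\<in>C. P h z"
  shows "\<exists>m\<ge>k0. \<forall>h\<in>H. \<exists>z\<in>X m. P h z"
  using assms
proof (induction H rule: finite_induct)
  case empty then show ?case by blast
next
  case (insert h H)
  then obtain m1 where m1: "m1 \<ge> k0" "\<forall>h\<in>H. \<exists>z\<in>X m1. P h z" by blast
  obtain z k where z: "z \<in> X k" "P h z" using insert.prems unfolding C_def by blast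
  define m where "m = max m1 k"
  have "X m1 \<subseteq> X m" "X k \<subseteq> X m" unfolding m_def by (simp_all add: X_mono)
  then have "\<forall>h'\<in>insert h H. \<exists>z\<in>X m. P h' z" using m1 z by blast
  moreover have "m \<ge> k0" using m1 unfolding m_def by simp
  ultimately show ?case by blast
qed

lemma fin_in_X:
  assumes "finite S" "S \<subseteq> C"
  shows "\<exists>m\<ge>k0. S \<subseteq> X m"
proof -
  have "\<exists>m\<ge>k0. \<forall>h\<in>S. \<exists>z\<in>X m. z = h"
    using pick_X[of S "\<lambda>h z. z = h"] assms by blast
  then show ?thesis by blast
qed

lemma C_chain:
  assumes "x \<in> C" "y \<in> C" "j \<in> compo N ` npre N x" "j \<in> compo N ` npre N y"
  shows "x = y \<or> (x,y) \<in> (Ev N)\<^sup>+ \<or> (y,x) \<in> (Ev N)\<^sup>+"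
proof -
  obtain m where "{x,y} \<subseteq> X m" using fin_in_X[of "{x,y}" 0] assms by auto
  then show ?thesis using chain_comp[OF g fe[rule_format] fin[rule_format], of x m y j] assms
    unfolding X_def by blast
qed

lemma C_cfree:
  assumes "x \<in> C" "y \<in> C" "x \<noteq> y"
  shows "npre N x \<inter> npre N y = {}"
proof -
  obtain m where "{x,y} \<subseteq> X m" using fin_in_X[of "{x,y}" 0] assms by auto
  then show ?thesis using good_D(11)[OF g fe[rule_format, of m]] assms
    unfolding X_def cfree_def by blast
qed

lemma C_down:
  assumes "y \<in> C" "(x,y) \<in> (Ev N)\<^sup>*"
  shows "x \<in> C \<and> (\<exists>k. x \<in> X k \<and> y \<in> X k)"
proof -
  obtain k where k: "y \<in> X k" using assms unfolding C_def by blast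
  have "x \<in> X k" using assms(2) k
  proof (induction rule: converse_rtrancl_induct)
    case base then show ?case .
  next
    case (step a b)
    then have "b \<in> X k" by blast
    then show ?case using step.hyps(1) local_conf_dclosed[of N "f k"] unfolding X_def dclosed_def
      by blast
  qed
  then show ?thesis using k unfolding C_def by blast
qed

lemma lc_sub_X: "x \<in> X k \<Longrightarrow> local_conf N x \<subseteq> X k"
  unfolding X_def by (rule lc_mono)

abbreviation le :: "'e \<Rightarrow> 'e \<Rightarrow> bool" where
  "le x y \<equiv> (x, y) \<in> (Ev N)\<^sup>*"

lemma few_below:
  "finite {x \<in> C. \<not> le (f i) x}"
proof -
  define ok where "ok h \<longleftrightarrow> (\<exists>u. u \<in> C \<and> h \<in> compo N ` npre N u \<and> le (f i) u)" for h
  define U where "U h = (SOME u. u \<in> C \<and> h \<in> compo N ` npre N u \<and> le (f i) u)" for h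
  have U: "U h \<in> C \<and> h \<in> compo N ` npre N (U h) \<and> le (f i) (U h)" if "ok h" for h
    using that unfolding ok_def U_def by (rule someI_ex)
  define F where "F = (\<Union>h\<in>{h. h < n \<and> ok h}. local_conf N (U h))"
  have finF: "finite F" unfolding F_def
  proof (rule finite_UN_I)
    show "finite {h. h < n \<and> ok h}" by simp
  next
    fix h assume "h \<in> {h. h < n \<and> ok h}"
    then have "U h \<in> C" using U by blast
    then obtain k where "U h \<in> X k" unfolding C_def by blast
    then show "finite (local_conf N (U h))" using lc_sub_X X_fin by (meson finite_subset)
  qed
  have main: "x \<in> F" if x: "x \<in> C" "\<not> le (f i) x" for x
  proof -
    obtain k where k: "k \<ge> i" "{x} \<subseteq> X k" using fin_in_X[of "{x}" i] x by auto
    then have "x \<in> local_conf N (f k)" unfolding X_def by simp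
    then have "le x (f k)" unfolding lc_mem by (auto intro: trancl_into_rtrancl)
    have fik: "le (f i) (f k)" using chain_lt[of i k] k(1)
      by (metis le_neq_implies_less r_into_rtrancl rtrancl.rtrancl_refl trancl_into_rtrancl)
    show ?thesis using \<open>le x (f k)\<close> x(2)
    proof (induction rule: converse_rtrancl_induct)
      case base
      then show ?case using fik by blast
    next
      case (step x x2)
      have x2C: "x2 \<in> C" using C_down[OF _ step.hyps(2)] f_in_X unfolding C_def by blast
      have xC: "x \<in> C" using C_down[of x2 x] x2C step.hyps(1) by blast
      obtain c where c: "c \<in> npost N x" "c \<in> npre N x2" "x \<in> events N" "x2 \<in> events N"
        using step.hyps(1) unfolding Ev_def by blast
      show ?case
      proof (cases "le (f i) x2")
        case True
        define h where "h = compo N c"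
        have hn: "h < n" using good_D(1)[OF g c(4)] c(2) good_D(8)[OF g] unfolding h_def by blast
        have "ok h" unfolding ok_def using x2C c(2) True unfolding h_def by blast
        note Uh = U[OF this]
        have "h \<in> compo N ` npost N x" using c(1) unfolding h_def by blast
        then have hx: "h \<in> compo N ` npre N x" using good_D(6)[OF g c(3)] by simp
        have "x = U h \<or> (x, U h) \<in> (Ev N)\<^sup>+ \<or> (U h, x) \<in> (Ev N)\<^sup>+"
          using C_chain[OF xC _ hx] Uh by blast
        moreover have "\<not> (x = U h)" using Uh step.prems by blast
        moreover have "\<not> (U h, x) \<in> (Ev N)\<^sup>+"
          using Uh step.prems by (meson rtrancl_trans trancl_into_rtrancl)
        ultimately have "(x, U h) \<in> (Ev N)\<^sup>+" by blast
        then have "x \<in> local_conf N (U h)" using c(3) unfolding lc_mem by blast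
        then show ?thesis unfolding F_def using hn \<open>ok h\<close> by blast
      next
        case False
        then have "x2 \<in> F" using step.IH by blast
        then obtain h where h: "h < n" "ok h" "x2 \<in> local_conf N (U h)" unfolding F_def by blast
        then have "x \<in> local_conf N (U h)"
          using step.hyps(1) local_conf_dclosed[of N "U h"] unfolding dclosed_def by blast
        then show ?thesis unfolding F_def using h by blast
      qed
    qed
  qed
  have "{x \<in> C. \<not> le (f i) x} \<subseteq> F" using main by blast
  then show ?thesis using finF by (rule finite_subset)
qed

end


context chainctx
begin

definition alive :: "nat \<Rightarrow> bool" where
  "alive h \<longleftrightarrow> (\<forall>r. \<exists>z\<in>C. h \<in> compo N ` npre N z \<and> le (f r) z)"

lemma s0_exists: "\<exists>s0. \<forall>x\<in>C - X s0. \<forall>h\<in>compo N ` npre N x. alive h"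
proof -
  define S where "S = (\<Union>h\<in>{h. h < n \<and> \<not> alive h}. {z\<in>C. h \<in> compo N ` npre N z})"
  have "finite S" unfolding S_def
  proof (rule finite_UN_I)
    show "finite {h. h < n \<and> \<not> alive h}" by simp
  next
    fix h assume "h \<in> {h. h < n \<and> \<not> alive h}"
    then obtain r where r: "\<forall>z\<in>C. h \<in> compo N ` npre N z \<longrightarrow> \<not> le (f r) z"
      unfolding alive_def by blast
    have "{z\<in>C. h \<in> compo N ` npre N z} \<subseteq> {x \<in> C. \<not> le (f r) x}" using r by blast
    then show "finite {z\<in>C. h \<in> compo N ` npre N z}" using few_below by (rule finite_subset)
  qed
  moreover have "S \<subseteq> C" unfolding S_def by blast
  ultimately have "\<exists>m\<ge>0. S \<subseteq> X m" by (rule fin_in_X)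
  then obtain s0 where s0: "S \<subseteq> X s0" by blast
  have "\<forall>x\<in>C - X s0. \<forall>h\<in>compo N ` npre N x. alive h"
  proof (intro ballI)
    fix x h assume x: "x \<in> C - X s0" and h: "h \<in> compo N ` npre N x"
    have xe: "x \<in> events N" using x C_events by blast
    have "h < n" using h good_D(1)[OF g xe] good_D(8)[OF g] by blast
    show "alive h"
    proof (rule ccontr)
      assume "\<not> alive h"
      then have "x \<in> S" unfolding S_def using x h \<open>h < n\<close> by blast
      then show False using s0 x by blast
    qed
  qed
  then show ?thesis by blast
qed

lemma Mark_X: "Mark N (f i) = cutset N (X i)"
  unfolding X_def using Mark_eq[OF g fe[rule_format] fin[rule_format]] .

lemma cut_finite: "finite (cutset N (X i))"
proof -
  have inj: "inj_on (compo N) (cutset N (X i))"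
    unfolding X_def
    by (rule cut_inj[OF g fin[rule_format] local_conf_dclosed good_D(11)[OF g fe[rule_format]]])
  have "cutset N (X i) \<subseteq> conds N"
    unfolding cutset_def init_mark_def PostS_def using X_events[of i] good_D(2)[OF g] by blast
  then have "compo N ` cutset N (X i) \<subseteq> {..<n}" using good_D(8)[OF g] by auto
  then have "finite (compo N ` cutset N (X i))" by (rule finite_subset) simp
  then show ?thesis using inj by (rule finite_imageD)
qed

lemma step:
  assumes s0: "\<forall>x\<in>C - X s0. \<forall>h\<in>compo N ` npre N x. alive h" and i: "s0 \<le> i"
  shows "\<exists>m>i. strong_cause N (f i) (f m)"
proof -
  let ?K = "cutset N (X i)"
  define S1 where "S1 = (\<Union>b\<in>?K. {d\<in>C. b \<in> npre N d})"
  have "finite S1" unfolding S1_def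
  proof (rule finite_UN_I[OF cut_finite])
    fix b show "finite {d\<in>C. b \<in> npre N d}"
    proof (rule subsingleton_finite, intro ballI)
      fix x y assume "x \<in> {d\<in>C. b \<in> npre N d}" "y \<in> {d\<in>C. b \<in> npre N d}"
      then show "x = y" using C_cfree[of x y] by blast
    qed
  qed
  moreover have "S1 \<subseteq> C" unfolding S1_def by blast
  ultimately have "\<exists>m\<ge>i. S1 \<subseteq> X m" by (rule fin_in_X)
  then obtain r where r: "r \<ge> i" "S1 \<subseteq> X r" by blast
  define H where "H = {h. h < n \<and> alive h}"
  have "\<forall>h\<in>H. \<exists>z\<in>C. h \<in> compo N ` npre N z \<and> le (f r) z"
    unfolding H_def alive_def by blast
  moreover have "finite H" unfolding H_def by simp
  ultimately have "\<exists>m\<ge>Suc r. \<forall>h\<in>H. \<exists>z\<in>X m. h \<in> compo N ` npre N z \<and> le (f r) z"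
    using pick_X[of H "\<lambda>h z. h \<in> compo N ` npre N z \<and> le (f r) z" "Suc r"] by blast
  then obtain m where m: "m \<ge> Suc r" "\<forall>h\<in>H. \<exists>z\<in>X m. h \<in> compo N ` npre N z \<and> le (f r) z"
    by blast
  have im: "i < m" using m r by simp
  have Xim: "X i \<subseteq> X m" using im X_mono by simp
  have Xs0: "X s0 \<subseteq> X i" using i X_mono by simp
  have em: "f m \<in> events N" using fe by blast
  have finm: "finite (local_conf N (f m))" using fin by blast
  have ev: "ev_lt N (f i) (f m)" unfolding ev_lt_Ev using chain_lt[OF im] .
  have "\<forall>b\<in>cutset N (X m) - ?K. \<forall>b'\<in>?K - cutset N (X m). cond_lt N b' b"
  proof (intro ballI)
    fix b b' assume b: "b \<in> cutset N (X m) - ?K" and b': "b' \<in> ?K - cutset N (X m)"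
    have "b' \<in> init_mark N \<union> PostS N (X m)"
      using b' Xim unfolding cutset_def PostS_def by blast
    then have "b' \<in> PreS N (X m)" using b' unfolding cutset_def by blast
    then obtain d where d: "d \<in> X m" "b' \<in> npre N d" unfolding PreS_def by blast
    have "d \<in> S1" unfolding S1_def C_def using d b' by blast
    then have "d \<in> X r" using r by blast
    then have ldr: "le d (f r)" unfolding X_def lc_mem by (auto intro: trancl_into_rtrancl)
    have bnm: "b \<notin> PreS N (X m)" using b unfolding cutset_def by blast
    have bni: "b \<notin> init_mark N"
    proof
      assume "b \<in> init_mark N"
      moreover have "b \<notin> PreS N (X i)" using bnm Xim unfolding PreS_def by blast
      ultimately show False using b unfolding cutset_def by blast
    qed
    then obtain p where p: "p \<in> X m" "b \<in> npost N p" using b unfolding cutset_def PostS_def by blast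
    have pni: "p \<notin> X i"
    proof
      assume "p \<in> X i"
      then have "b \<in> PostS N (X i)" using p unfolding PostS_def by blast
      moreover have "b \<notin> PreS N (X i)" using bnm Xim unfolding PreS_def by blast
      ultimately show False using b unfolding cutset_def by blast
    qed
    have pe: "p \<in> events N" using p X_events by blast
    define h where "h = compo N b"
    have "h \<in> compo N ` npost N p" using p unfolding h_def by blast
    then have hp: "h \<in> compo N ` npre N p" using good_D(6)[OF g pe] by simp
    have "p \<in> C - X s0" using p pni Xs0 unfolding C_def by blast
    then have "alive h" using s0 hp by blast
    moreover have "h < n" using good_D(2)[OF g pe] p(2) good_D(8)[OF g] unfolding h_def by blast
    ultimately have "h \<in> H" unfolding H_def by blast
    then obtain z where z: "z \<in> X m" "h \<in> compo N ` npre N z" "le (f r) z" using m by blast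
    have "z = p \<or> (z,p) \<in> (Ev N)\<^sup>+ \<or> (p,z) \<in> (Ev N)\<^sup>+"
      using chain_comp[OF g em finm, of z p h] z p hp unfolding X_def by blast
    moreover have "\<not> (p,z) \<in> (Ev N)\<^sup>+"
    proof
      assume "(p,z) \<in> (Ev N)\<^sup>+"
      from last_comp[OF g em finm _ this p(2)] z bnm show False
        unfolding X_def h_def by blast
    qed
    ultimately have "le z p" by (auto intro: trancl_into_rtrancl)
    then have "le d p" using ldr z(3) by (meson rtrancl_trans)
    moreover have "d \<in> events N" using d X_events by blast
    ultimately show "cond_lt N b' b" using cond_lt_intro[OF d(2) _ _ pe p(2)] by blast
  qed
  then have "strong_cause N (f i) (f m)"
    unfolding strong_cause_def Mark_X using ev by blast
  then show ?thesis using im by blast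
qed

lemma finite_case:
  "\<exists>g :: nat \<Rightarrow> nat. strict_mono g \<and> (\<forall>k. strong_cause N (f (g k)) (f (g (Suc k))))"
proof -
  obtain s0 where s0: "\<forall>x\<in>C - X s0. \<forall>h\<in>compo N ` npre N x. alive h" using s0_exists by blast
  define nx where "nx i = (SOME m. m > i \<and> strong_cause N (f i) (f m))" for i
  have nx: "nx i > i \<and> strong_cause N (f i) (f (nx i))" if "s0 \<le> i" for i
    unfolding nx_def using step[OF s0 that] by (rule someI_ex)
  define gg where "gg = rec_nat s0 (\<lambda>_ i. nx i)"
  have gg0: "gg 0 = s0" and ggS: "\<And>k. gg (Suc k) = nx (gg k)" unfolding gg_def by simp_all
  have ge: "s0 \<le> gg k" for k
  proof (induction k)
    case 0 then show ?case using gg0 by simp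
  next
    case (Suc k) then show ?case using nx[OF Suc] ggS[of k] by simp
  qed
  have "gg k < gg (Suc k) \<and> strong_cause N (f (gg k)) (f (gg (Suc k)))" for k
    using nx[OF ge[of k]] ggS[of k] by simp
  then show ?thesis by (intro exI[of _ gg]) (simp add: strict_mono_Suc_iff)
qed

end


definition Hist :: "('b, 'e, 's) net \<Rightarrow> 'b set \<Rightarrow> 'e set" where
  "Hist N K = {y \<in> events N. \<exists>z b. (y,z) \<in> (Ev N)\<^sup>* \<and> z \<in> events N \<and> b \<in> K \<and> b \<in> npost N z}"

definition Inv :: "('b, 'e, 's) net \<Rightarrow> 'b set \<Rightarrow> bool" where
  "Inv N K \<longleftrightarrow> cfree N (Hist N K) \<and> (\<forall>y\<in>Hist N K. npre N y \<inter> K = {})"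

lemma Inv_init: "Inv N (init_mark N)"
proof -
  have "Hist N (init_mark N) = {}" unfolding Hist_def init_mark_def by blast
  then show ?thesis unfolding Inv_def cfree_def by simp
qed

lemma Inv_step:
  assumes inv: "Inv N K" and x: "x \<in> events N" "npre N x \<subseteq> K"
    and up: "uprod N" and ns: "\<And>y. (y,y) \<notin> Ev N" and ne: "\<And>y. y \<in> events N \<Longrightarrow> npre N y \<noteq> {}"
  shows "Inv N ((K - npre N x) \<union> npost N x)"
proof -
  let ?K' = "(K - npre N x) \<union> npost N x"
  have sub: "Hist N ?K' \<subseteq> insert x (Hist N K)"
  proof
    fix y assume "y \<in> Hist N ?K'"
    then obtain z b where y: "y \<in> events N" "(y,z) \<in> (Ev N)\<^sup>*" "z \<in> events N" "b \<in> ?K'" "b \<in> npost N z"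
      unfolding Hist_def by blast
    show "y \<in> insert x (Hist N K)"
    proof (cases "b \<in> npost N x")
      case False
      then have "b \<in> K" using y(4) by blast
      then show ?thesis using y unfolding Hist_def by blast
    next
      case True
      then have "z = x" using up y(3,5) x(1) unfolding uprod_def by blast
      then have "(y,x) \<in> (Ev N)\<^sup>*" using y(2) by simp
      then show ?thesis
      proof (cases rule: rtranclE)
        case base then show ?thesis by simp
      next
        case (step w)
        then obtain c where "c \<in> npost N w" "c \<in> npre N x" "w \<in> events N" unfolding Ev_def by blast
        then have "y \<in> Hist N K" using step(1) y(1) x(2) unfolding Hist_def by blast
        then show ?thesis by simp
      qed
    qed
  qed
  have A: "cfree N (insert x (Hist N K))"
    unfolding cfree_def
  proof (intro ballI impI)
    fix y1 y2 assume y1: "y1 \<in> insert x (Hist N K)" and y2: "y2 \<in> insert x (Hist N K)" and ne12: "y1 \<noteq> y2"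
    show "npre N y1 \<inter> npre N y2 = {}"
    proof (cases "y1 = x")
      case True
      then have "y2 \<in> Hist N K" using y2 ne12 by blast
      then show ?thesis using inv x(2) True unfolding Inv_def by blast
    next
      case False
      then have h1: "y1 \<in> Hist N K" using y1 by blast
      show ?thesis
      proof (cases "y2 = x")
        case True
        then show ?thesis using inv x(2) h1 unfolding Inv_def by blast
      next
        case False
        then show ?thesis using inv h1 y2 ne12 unfolding Inv_def cfree_def by blast
      qed
    qed
  qed
  have B: "\<forall>y\<in>insert x (Hist N K). npre N y \<inter> ?K' = {}"
  proof
    fix y assume y: "y \<in> insert x (Hist N K)"
    show "npre N y \<inter> ?K' = {}"
    proof (cases "y = x")
      case True
      have "npre N x \<inter> npost N x = {}" using ns[of x] x(1) unfolding Ev_def by blast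
      then show ?thesis using True by blast
    next
      case False
      then have hy: "y \<in> Hist N K" using y by blast
      have "npre N y \<inter> npost N x = {}"
      proof (rule ccontr)
        assume "npre N y \<inter> npost N x \<noteq> {}"
        then have xy: "(x,y) \<in> Ev N" using x(1) hy unfolding Ev_def Hist_def by blast
        from hy obtain z b where zb: "(y,z) \<in> (Ev N)\<^sup>*" "z \<in> events N" "b \<in> K" "b \<in> npost N z"
          unfolding Hist_def by blast
        have "(x,z) \<in> (Ev N)\<^sup>*" by (rule converse_rtrancl_into_rtrancl[OF xy zb(1)])
        then have "x \<in> Hist N K" using zb x(1) unfolding Hist_def by blast
        then have "npre N x \<inter> K = {}" using inv unfolding Inv_def by blast
        then show False using x ne[OF x(1)] by blast
      qed
      then show ?thesis using inv hy unfolding Inv_def by blast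
    qed
  qed
  show ?thesis unfolding Inv_def using A B sub cfree_sub by blast
qed

lemma Inv_fire:
  assumes "fire_list N K0 es = Some K" "Inv N K0"
    and up: "uprod N" and ns: "\<And>y. (y,y) \<notin> Ev N" and ne: "\<And>y. y \<in> events N \<Longrightarrow> npre N y \<noteq> {}"
  shows "Inv N K"
  using assms(1,2)
proof (induction es arbitrary: K0)
  case Nil then show ?case by simp
next
  case (Cons x rest)
  from Cons.prems(1) have x: "x \<in> events N" "npre N x \<subseteq> K0"
    and f: "fire_list N ((K0 - npre N x) \<union> npost N x) rest = Some K"
    by (auto split: if_splits)
  show ?case using Cons.IH[OF f Inv_step[OF Cons.prems(2) x up ns ne]] .
qed

lemma fire_sub:
  assumes "fire_list N K0 es = Some K" "K0 \<subseteq> conds N" "\<forall>e\<in>events N. npost N e \<subseteq> conds N"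
  shows "K \<subseteq> conds N"
  using assms
proof (induction es arbitrary: K0)
  case Nil then show ?case by simp
next
  case (Cons x rest)
  from Cons.prems(1) have x: "x \<in> events N" "npre N x \<subseteq> K0"
    and f: "fire_list N ((K0 - npre N x) \<union> npost N x) rest = Some K"
    by (auto split: if_splits)
  show ?case using Cons.IH[OF f] Cons.prems(2,3) x by blast
qed

lemma Hist_mono: "M \<subseteq> K \<Longrightarrow> Hist N M \<subseteq> Hist N K"
  unfolding Hist_def by blast



lemma good_base:
  assumes "events N = {}" "bij_betw (clab N) (conds N) {(j, init (A j)) | j. j < n}"
  shows "good n N"
proof -
  have E: "Ev N = {}" using assms(1) unfolding Ev_def by blast
  have cl: "\<exists>j. j < n \<and> clab N b = (j, init (A j))" if b: "b \<in> conds N" for b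
  proof -
    have "clab N b \<in> clab N ` conds N" using b by (rule imageI)
    then have "clab N b \<in> {(j, init (A j)) | j. j < n}" using assms(2) unfolding bij_betw_def by simp
    then show ?thesis by blast
  qed
  have lt: "\<forall>b\<in>conds N. compo N b < n"
    using cl unfolding compo_def by fastforce
  have im: "init_mark N = conds N" using assms(1) unfolding init_mark_def by blast
  have inj: "inj_on (compo N) (conds N)"
  proof (rule inj_onI)
    fix b1 b2 assume b: "b1 \<in> conds N" "b2 \<in> conds N" "compo N b1 = compo N b2"
    obtain j1 where j1: "clab N b1 = (j1, init (A j1))" using cl[OF b(1)] by blast
    obtain j2 where j2: "clab N b2 = (j2, init (A j2))" using cl[OF b(2)] by blast
    have "clab N b1 = clab N b2" using j1 j2 b(3) unfolding compo_def by simp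
    then show "b1 = b2" using assms(2) b(1,2) unfolding bij_betw_def by (auto dest: inj_onD)
  qed
  show ?thesis unfolding good_def uprod_def using assms(1) E lt im inj by simp
qed

lemma Ev_ext:
  assumes "(a,b) \<in> Ev N'" and ev: "events N' = insert e (events N)" "e \<notin> events N"
    and pre: "\<forall>x\<in>events N. npre N' x = npre N x \<and> npost N' x = npost N x"
    and sub: "\<forall>x\<in>events N. npre N x \<subseteq> conds N"
    and M: "npre N' e = M" "M \<subseteq> conds N" and Q: "npost N' e = Q" "Q \<inter> conds N = {}"
  shows "a \<noteq> e \<and> a \<in> events N \<and> ((a,b) \<in> Ev N \<or> (b = e \<and> npost N a \<inter> M \<noteq> {}))"
proof -
  from assms(1) have ab: "a \<in> insert e (events N)" "b \<in> insert e (events N)" "npost N' a \<inter> npre N' b \<noteq> {}"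
    unfolding Ev_def ev by blast+
  have "a \<noteq> e"
  proof
    assume "a = e"
    then have "Q \<inter> npre N' b \<noteq> {}" using ab Q by simp
    moreover have "npre N' b \<subseteq> conds N"
    proof (cases "b = e")
      case True then show ?thesis using M by simp
    next
      case False
      then have "b \<in> events N" using ab(2) by blast
      then show ?thesis using sub pre by simp
    qed
    ultimately show False using Q by blast
  qed
  then have a: "a \<in> events N" using ab by blast
  show ?thesis
  proof (cases "b = e")
    case True
    then show ?thesis using a \<open>a \<noteq> e\<close> ab(3) pre M by auto
  next
    case False
    then have "b \<in> events N" using ab by blast
    then show ?thesis using a \<open>a \<noteq> e\<close> ab(3) pre unfolding Ev_def by auto
  qed
qed

lemma Ev_ext_trancl:
  assumes "(a,b) \<in> (Ev N')\<^sup>+" and ev: "events N' = insert e (events N)" "e \<notin> events N"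
    and pre: "\<forall>x\<in>events N. npre N' x = npre N x \<and> npost N' x = npost N x"
    and sub: "\<forall>x\<in>events N. npre N x \<subseteq> conds N"
    and M: "npre N' e = M" "M \<subseteq> conds N" and Q: "npost N' e = Q" "Q \<inter> conds N = {}"
  shows "a \<noteq> e \<and> ((a,b) \<in> (Ev N)\<^sup>+ \<or> (b = e \<and> (\<exists>z. (a,z) \<in> (Ev N)\<^sup>* \<and> z \<in> events N \<and> npost N z \<inter> M \<noteq> {})))"
  using assms(1)
proof (induction rule: trancl_induct)
  case (base b)
  from Ev_ext[OF this ev pre sub M Q] show ?case by blast
next
  case (step b c)
  from Ev_ext[OF step.hyps(2) ev pre sub M Q] have bc: "b \<noteq> e" "b \<in> events N"
    "(b,c) \<in> Ev N \<or> (c = e \<and> npost N b \<inter> M \<noteq> {})" by blast+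
  then have ab: "(a,b) \<in> (Ev N)\<^sup>+" using step.IH by blast
  show ?case using bc(3)
  proof
    assume "(b,c) \<in> Ev N"
    then show ?thesis using ab step.IH by (meson trancl_into_trancl)
  next
    assume "c = e \<and> npost N b \<inter> M \<noteq> {}"
    then show ?thesis using ab bc(2) step.IH by (meson trancl_into_rtrancl)
  qed
qed



lemma inj_pre_set:
  assumes "bij_betw c S (pre_set t)"
  shows "inj_on (\<lambda>b. fst (c b)) S"
proof (rule inj_onI)
  fix b1 b2 assume b: "b1 \<in> S" "b2 \<in> S" "fst (c b1) = fst (c b2)"
  have "c b1 \<in> pre_set t" "c b2 \<in> pre_set t" using assms b unfolding bij_betw_def by blast+
  then obtain j1 u1 j2 u2 where "c b1 = (j1, fst u1)" "t j1 = Some u1" "c b2 = (j2, fst u2)" "t j2 = Some u2"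
    unfolding pre_set_def by blast
  then have "c b1 = c b2" using b(3) by auto
  then show "b1 = b2" using assms b unfolding bij_betw_def by (auto dest: inj_onD)
qed

lemma inj_post_set:
  assumes "bij_betw c S (post_set t)"
  shows "inj_on (\<lambda>b. fst (c b)) S"
proof (rule inj_onI)
  fix b1 b2 assume b: "b1 \<in> S" "b2 \<in> S" "fst (c b1) = fst (c b2)"
  have "c b1 \<in> post_set t" "c b2 \<in> post_set t" using assms b unfolding bij_betw_def by blast+
  then obtain j1 u1 j2 u2 where "c b1 = (j1, snd u1)" "t j1 = Some u1" "c b2 = (j2, snd u2)" "t j2 = Some u2"
    unfolding post_set_def by blast
  then have "c b1 = c b2" using b(3) by auto
  then show "b1 = b2" using assms b unfolding bij_betw_def by (auto dest: inj_onD)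
qed

lemma fst_pre_set: "fst ` pre_set t = {j. t j \<noteq> None}"
  unfolding pre_set_def by force

lemma fst_post_set: "fst ` post_set t = {j. t j \<noteq> None}"
  unfolding post_set_def by force

lemma good_extend:
  assumes gN: "good n N" and K: "K \<in> reach_marks N" "M \<subseteq> K" and t: "is_gtrans A n t"
    and bM: "bij_betw (clab N) M (pre_set t)"
    and e: "e \<notin> events N" and Q: "Q \<inter> conds N = {}"
    and ev: "events N' = insert e (events N)" and cd: "conds N' = conds N \<union> Q"
    and pe: "npre N' e = M" "npost N' e = Q"
    and bQ: "bij_betw (clab N') Q (post_set t)" and ag: "agrees N N'"
  shows "good n N'"
proof -
  have pre: "\<forall>x\<in>events N. npre N' x = npre N x \<and> npost N' x = npost N x"
    using ag unfolding agrees_def by blast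
  have cl: "\<And>b. b \<in> conds N \<Longrightarrow> compo N' b = compo N b"
    using ag unfolding agrees_def compo_def by simp
  obtain es where es: "fire_list N (init_mark N) es = Some K" using K(1) unfolding reach_marks_def by blast
  have Kc: "K \<subseteq> conds N"
    using fire_sub[OF es] good_D(2)[OF gN] unfolding init_mark_def by blast
  have Mc: "M \<subseteq> conds N" using Kc K(2) by blast
  obtain a where ga: "gtrans_lab A n t a" using t unfolding is_gtrans_def by blast
  then have tn: "\<forall>j. n \<le> j \<longrightarrow> t j = None" and tne: "\<exists>j<n. t j \<noteq> None"
    unfolding gtrans_lab_def by blast+
  have "pre_set t \<noteq> {}" using tne unfolding pre_set_def by fastforce
  then have Mne: "M \<noteq> {}" using bM unfolding bij_betw_def by auto
  have cM: "compo N' ` M = {j. t j \<noteq> None}"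
  proof -
    have "compo N' ` M = compo N ` M" by (intro image_cong) (use cl Mc in auto)
    also have "\<dots> = fst ` clab N ` M" unfolding compo_def by (simp add: image_image)
    also have "\<dots> = {j. t j \<noteq> None}" using bM fst_pre_set unfolding bij_betw_def by simp
    finally show ?thesis .
  qed
  have cQ: "compo N' ` Q = {j. t j \<noteq> None}"
  proof -
    have "compo N' ` Q = fst ` clab N' ` Q" unfolding compo_def by (simp add: image_image)
    also have "\<dots> = {j. t j \<noteq> None}" using bQ fst_post_set unfolding bij_betw_def by simp
    finally show ?thesis .
  qed
  have iM: "inj_on (compo N') M"
  proof -
    have "inj_on (compo N) M" using inj_pre_set[OF bM] unfolding compo_def by simp
    then show ?thesis using cl Mc inj_on_cong[of M "compo N'" "compo N"] by blast
  qed
  have iQ: "inj_on (compo N') Q" using inj_post_set[OF bQ] unfolding compo_def by simp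
  have subpre: "\<forall>x\<in>events N. npre N x \<subseteq> conds N" using good_D(1)[OF gN] by blast
  note ET = Ev_ext_trancl[OF _ ev e pre subpre pe(1) Mc pe(2) Q]
  have P1: "\<forall>x\<in>events N'. npre N' x \<subseteq> conds N' \<and> npost N' x \<subseteq> conds N' \<and> npre N' x \<noteq> {}
      \<and> inj_on (compo N') (npre N' x) \<and> inj_on (compo N') (npost N' x)
      \<and> compo N' ` npre N' x = compo N' ` npost N' x"
  proof
    fix x assume "x \<in> events N'"
    then consider "x = e" | "x \<in> events N" using ev by blast
    then show "npre N' x \<subseteq> conds N' \<and> npost N' x \<subseteq> conds N' \<and> npre N' x \<noteq> {}
      \<and> inj_on (compo N') (npre N' x) \<and> inj_on (compo N') (npost N' x)
      \<and> compo N' ` npre N' x = compo N' ` npost N' x"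
    proof cases
      case 1
      then show ?thesis using Mc cd pe Mne iM iQ cM cQ by auto
    next
      case 2
      have s1: "npre N x \<subseteq> conds N" and s2: "npost N x \<subseteq> conds N" and s3: "npre N x \<noteq> {}"
        and s4: "inj_on (compo N) (npre N x)" and s5: "inj_on (compo N) (npost N x)"
        and s6: "compo N ` npre N x = compo N ` npost N x"
        using good_D(1-6)[OF gN 2] by auto
      have c1: "compo N' ` npre N x = compo N ` npre N x" by (intro image_cong) (use cl s1 in auto)
      have c2: "compo N' ` npost N x = compo N ` npost N x" by (intro image_cong) (use cl s2 in auto)
      have i1: "inj_on (compo N') (npre N x)" using s4 cl s1 inj_on_cong[of "npre N x" "compo N'" "compo N"] by blast
      have i2: "inj_on (compo N') (npost N x)" using s5 cl s2 inj_on_cong[of "npost N x" "compo N'" "compo N"] by blast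
      show ?thesis using pre 2 s1 s2 s3 i1 i2 c1 c2 s6 cd by auto
    qed
  qed
  have P2: "uprod N'"
    unfolding uprod_def
  proof (intro ballI impI)
    fix x y assume x: "x \<in> events N'" and y: "y \<in> events N'" and ne: "npost N' x \<inter> npost N' y \<noteq> {}"
    show "x = y"
    proof (cases "x = e")
      case True
      show ?thesis
      proof (rule ccontr)
        assume "x \<noteq> y"
        then have yN: "y \<in> events N" using y True ev by auto
        have "npost N y \<subseteq> conds N" by (rule good_D(2)[OF gN yN])
        moreover have "npost N' y = npost N y" using pre yN by blast
        ultimately show False using ne True pe(2) Q by blast
      qed
    next
      case False
      then have xN: "x \<in> events N" using x ev by blast
      show ?thesis
      proof (cases "y = e")
        case True
        have "npost N x \<subseteq> conds N" by (rule good_D(2)[OF gN xN])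
        moreover have "npost N' x = npost N x" using pre xN by blast
        ultimately show ?thesis using ne True pe(2) Q by blast
      next
        case False
        then have "y \<in> events N" using y ev by blast
        then show ?thesis using xN ne pre good_D(7)[OF gN] unfolding uprod_def by auto
      qed
    qed
  qed
  have P3: "\<forall>b\<in>conds N'. compo N' b < n"
  proof
    fix b assume "b \<in> conds N'"
    then consider "b \<in> conds N" | "b \<in> Q" using cd by blast
    then show "compo N' b < n"
    proof cases
      case 1 then show ?thesis using cl good_D(8)[OF gN] by simp
    next
      case 2
      then have "compo N' b \<in> {j. t j \<noteq> None}" using cQ by blast
      then show ?thesis using tn by (meson mem_Collect_eq not_le)
    qed
  qed
  have imsub: "init_mark N' \<subseteq> init_mark N"
  proof
    fix b assume b: "b \<in> init_mark N'"
    then have "b \<notin> Q" using pe(2) ev unfolding init_mark_def by auto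
    then show "b \<in> init_mark N" using b cd ev pre unfolding init_mark_def by auto
  qed
  have P4: "inj_on (compo N') (init_mark N')"
  proof -
    have "inj_on (compo N) (init_mark N')" using good_D(9)[OF gN] imsub by (rule inj_on_subset)
    moreover have "\<And>b. b \<in> init_mark N' \<Longrightarrow> compo N' b = compo N b"
      using imsub cl unfolding init_mark_def by blast
    ultimately show ?thesis using inj_on_cong[of "init_mark N'" "compo N'" "compo N"] by blast
  qed
  have P5: "\<forall>x. (x,x) \<notin> (Ev N')\<^sup>+"
  proof (intro allI notI)
    fix x assume "(x,x) \<in> (Ev N')\<^sup>+"
    from ET[OF this] have "x \<noteq> e" "(x,x) \<in> (Ev N)\<^sup>+" by blast+
    then show False using good_D(10)[OF gN] by blast
  qed
  have P6: "\<forall>x\<in>events N'. \<forall>y1\<in>local_conf N' x. \<forall>y2\<in>local_conf N' x. y1 \<noteq> y2 \<longrightarrow> npre N' y1 \<inter> npre N' y2 = {}"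
  proof (intro ballI impI)
    fix x y1 y2 assume x: "x \<in> events N'" and y1: "y1 \<in> local_conf N' x" and y2: "y2 \<in> local_conf N' x"
      and ne: "y1 \<noteq> y2"
    show "npre N' y1 \<inter> npre N' y2 = {}"
    proof (cases "x = e")
      case False
      then have xN: "x \<in> events N" using x ev by blast
      have lc: "local_conf N' x \<subseteq> local_conf N x"
      proof
        fix y assume "y \<in> local_conf N' x"
        then have "y = x \<or> (y,x) \<in> (Ev N')\<^sup>+" unfolding lc_mem by blast
        then have "y = x \<or> (y,x) \<in> (Ev N)\<^sup>+" using ET False by blast
        then show "y \<in> local_conf N x" using xN by (auto simp: lc_mem dest: Ev_trancl_events)
      qed
      have "npre N y1 \<inter> npre N y2 = {}" using good_D(11)[OF gN xN] lc y1 y2 ne unfolding cfree_def by blast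
      moreover have "y1 \<in> events N" "y2 \<in> events N" using lc y1 y2 lc_events[of N x] by blast+
      ultimately show ?thesis using pre by simp
    next
      case True
      have inv: "Inv N K"
        using Inv_fire[OF es Inv_init good_D(7)[OF gN]] good_D(10)[OF gN] good_D(3)[OF gN]
        by (meson r_into_trancl)
      have lc: "local_conf N' e - {e} \<subseteq> Hist N K"
      proof
        fix y assume "y \<in> local_conf N' e - {e}"
        then have "(y,e) \<in> (Ev N')\<^sup>+" "y \<noteq> e" by (auto simp: lc_mem)
        from ET[OF this(1)] obtain z where z: "(y,z) \<in> (Ev N)\<^sup>*" "z \<in> events N" "npost N z \<inter> M \<noteq> {}"
          using e by (auto dest: Ev_trancl_events)
        have "y \<in> events N"
        proof (cases "y = z")
          case True then show ?thesis using z by simp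
        next
          case False then have "(y,z) \<in> (Ev N)\<^sup>+" using z(1) by (simp add: rtrancl_eq_or_trancl)
          then show ?thesis by (auto dest: Ev_trancl_events)
        qed
        then show "y \<in> Hist N K" using z K(2) unfolding Hist_def by blast
      qed
      have hev: "Hist N K \<subseteq> events N" unfolding Hist_def by blast
      show ?thesis
      proof (cases "y1 = e")
        case True
        then have h2: "y2 \<in> Hist N K" using y2 ne lc \<open>x = e\<close> by blast
        then have "npre N' y2 = npre N y2" using pre hev by blast
        moreover have "npre N y2 \<inter> K = {}" using inv h2 unfolding Inv_def by blast
        ultimately show ?thesis using True pe(1) K(2) by blast
      next
        case False
        then have h1: "y1 \<in> Hist N K" using y1 lc \<open>x = e\<close> by blast
        show ?thesis
        proof (cases "y2 = e")
          case True
          have "npre N' y1 = npre N y1" using pre hev h1 by blast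
          moreover have "npre N y1 \<inter> K = {}" using inv h1 unfolding Inv_def by blast
          ultimately show ?thesis using True pe(1) K(2) by blast
        next
          case False
          then have h2: "y2 \<in> Hist N K" using y2 lc \<open>x = e\<close> by blast
          have "npre N' y1 = npre N y1" "npre N' y2 = npre N y2" using pre hev h1 h2 by blast+
          moreover have "npre N y1 \<inter> npre N y2 = {}" using inv h1 h2 ne unfolding Inv_def cfree_def by blast
          ultimately show ?thesis by simp
        qed
      qed
    qed
  qed
  show ?thesis unfolding good_def using P1 P2 P3 P4 P5 P6 by blast
qed

lemma fin_bp_good: "fin_bp A n N \<Longrightarrow> good n N"
proof (induction rule: fin_bp.induct)
  case (base N)
  then show ?case by (rule good_base)
next
  case (extend N K M t e Q N')
  show ?case by (rule good_extend[OF extend.IH extend.hyps(2-5) extend.hyps(7-12) extend.hyps(14,15)])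
qed



lemma subnet_trans: "subnet N1 N2 \<Longrightarrow> subnet N2 N3 \<Longrightarrow> subnet N1 N3"
  unfolding subnet_def agrees_def by (metis subset_iff)

lemma subnet_Ev: "subnet N1 N2 \<Longrightarrow> Ev N1 \<subseteq> Ev N2"
  unfolding subnet_def agrees_def Ev_def by auto

lemma subnet_Ev_trancl: "subnet N1 N2 \<Longrightarrow> (Ev N1)\<^sup>+ \<subseteq> (Ev N2)\<^sup>+"
proof
  fix p assume "subnet N1 N2" "p \<in> (Ev N1)\<^sup>+"
  then show "p \<in> (Ev N2)\<^sup>+" using subnet_Ev trancl_mono by blast
qed

lemma agrees_Ev: "agrees N1 N2 \<Longrightarrow> events N1 \<subseteq> events N2 \<Longrightarrow> Ev N1 \<subseteq> Ev N2"
  unfolding agrees_def Ev_def by auto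

context
  fixes A :: "nat \<Rightarrow> ('a, 's) lts" and n :: nat and N :: "('b, 'e, 's) net" and F
  assumes F: "\<forall>N'\<in>F. fin_bp A n N'"
    and dir: "\<forall>N1\<in>F. \<forall>N2\<in>F. \<exists>N3\<in>F. subnet N1 N3 \<and> subnet N2 N3"
    and cU: "conds N = (\<Union>N'\<in>F. conds N')" and eU: "events N = (\<Union>N'\<in>F. events N')"
    and ag: "\<forall>N'\<in>F. agrees N' N"
begin

lemma upper3:
  assumes "N1 \<in> F" "N2 \<in> F" "N3 \<in> F"
  shows "\<exists>N4\<in>F. subnet N1 N4 \<and> subnet N2 N4 \<and> subnet N3 N4"
proof -
  obtain N5 where N5: "N5 \<in> F" "subnet N1 N5" "subnet N2 N5" using dir assms by blast
  obtain N4 where N4: "N4 \<in> F" "subnet N5 N4" "subnet N3 N4" using dir assms N5 by blast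
  then show ?thesis using N5 subnet_trans by blast
qed

lemma mem_ev: "x \<in> events N \<Longrightarrow> \<exists>N'\<in>F. x \<in> events N'" using eU by blast
lemma mem_cd: "b \<in> conds N \<Longrightarrow> \<exists>N'\<in>F. b \<in> conds N'" using cU by blast

lemma agD:
  assumes "N' \<in> F" "x \<in> events N'"
  shows "npre N x = npre N' x" "npost N x = npost N' x"
  using ag assms unfolding agrees_def by auto

lemma compo_eq: "N' \<in> F \<Longrightarrow> b \<in> conds N' \<Longrightarrow> compo N b = compo N' b"
  using ag unfolding agrees_def compo_def by auto

lemma good_F: "N' \<in> F \<Longrightarrow> good n N'"
  using F fin_bp_good by blast

lemma Ev_in_F: "(x,y) \<in> Ev N \<Longrightarrow> \<exists>N'\<in>F. (x,y) \<in> Ev N'"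
proof -
  assume xy: "(x,y) \<in> Ev N"
  then have "x \<in> events N" "y \<in> events N" by (auto dest: Ev_events)
  then obtain N1 N2 where N1: "N1 \<in> F" "x \<in> events N1" and N2: "N2 \<in> F" "y \<in> events N2"
    using eU by blast
  obtain N3 where N3: "N3 \<in> F" "subnet N1 N3" "subnet N2 N3" using dir N1 N2 by blast
  have "x \<in> events N3" "y \<in> events N3" using N1 N2 N3 unfolding subnet_def by blast+
  moreover have "npost N x = npost N3 x" "npre N y = npre N3 y" using agD[OF N3(1)] calculation by auto
  ultimately have "(x,y) \<in> Ev N3" using xy unfolding Ev_def by auto
  then show ?thesis using N3 by blast
qed

lemma Ev_F_sub: "N' \<in> F \<Longrightarrow> Ev N' \<subseteq> Ev N"
  using ag eU by (intro agrees_Ev) auto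

lemma Ev_trancl_in_F: "(x,y) \<in> (Ev N)\<^sup>+ \<Longrightarrow> \<exists>N'\<in>F. (x,y) \<in> (Ev N')\<^sup>+"
proof (induction rule: trancl_induct)
  case (base y)
  then show ?case using Ev_in_F by blast
next
  case (step y z)
  obtain N1 where N1: "N1 \<in> F" "(x,y) \<in> (Ev N1)\<^sup>+" using step.IH by blast
  obtain N2 where N2: "N2 \<in> F" "(y,z) \<in> Ev N2" using Ev_in_F step.hyps(2) by blast
  obtain N3 where N3: "N3 \<in> F" "subnet N1 N3" "subnet N2 N3" using dir N1 N2 by blast
  have "(x,y) \<in> (Ev N3)\<^sup>+" using N1 N3 subnet_Ev_trancl by blast
  moreover have "(y,z) \<in> Ev N3" using N2 N3 subnet_Ev by blast
  ultimately show ?case using N3 by (meson trancl_into_trancl)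
qed

lemma good_N: "good n N"
proof -
  have P1: "\<forall>e\<in>events N. npre N e \<subseteq> conds N \<and> npost N e \<subseteq> conds N \<and> npre N e \<noteq> {}
      \<and> inj_on (compo N) (npre N e) \<and> inj_on (compo N) (npost N e)
      \<and> compo N ` npre N e = compo N ` npost N e"
  proof
    fix e assume "e \<in> events N"
    then obtain N' where N': "N' \<in> F" "e \<in> events N'" using eU by blast
    note gd = good_D[OF good_F[OF N'(1)]]
    have s1: "npre N' e \<subseteq> conds N'" and s2: "npost N' e \<subseteq> conds N'" using gd(1,2) N'(2) by auto
    have pp: "npre N e = npre N' e" "npost N e = npost N' e" using agD[OF N'] by auto
    have cs: "conds N' \<subseteq> conds N" using cU N'(1) by blast
    have c1: "compo N ` npre N' e = compo N' ` npre N' e"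
      by (intro image_cong) (use s1 compo_eq[OF N'(1)] in auto)
    have c2: "compo N ` npost N' e = compo N' ` npost N' e"
      by (intro image_cong) (use s2 compo_eq[OF N'(1)] in auto)
    have i1: "inj_on (compo N) (npre N' e)"
      using gd(4)[OF N'(2)] s1 compo_eq[OF N'(1)] inj_on_cong[of "npre N' e" "compo N" "compo N'"] by blast
    have i2: "inj_on (compo N) (npost N' e)"
      using gd(5)[OF N'(2)] s2 compo_eq[OF N'(1)] inj_on_cong[of "npost N' e" "compo N" "compo N'"] by blast
    show "npre N e \<subseteq> conds N \<and> npost N e \<subseteq> conds N \<and> npre N e \<noteq> {}
      \<and> inj_on (compo N) (npre N e) \<and> inj_on (compo N) (npost N e)
      \<and> compo N ` npre N e = compo N ` npost N e"
      unfolding pp using s1 s2 cs gd(3)[OF N'(2)] gd(6)[OF N'(2)] i1 i2 c1 c2 by auto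
  qed
  have P2: "uprod N"
    unfolding uprod_def
  proof (intro ballI impI)
    fix x y assume x: "x \<in> events N" and y: "y \<in> events N" and ne: "npost N x \<inter> npost N y \<noteq> {}"
    obtain N1 N2 where N1: "N1 \<in> F" "x \<in> events N1" and N2: "N2 \<in> F" "y \<in> events N2"
      using eU x y by blast
    obtain N3 where N3: "N3 \<in> F" "subnet N1 N3" "subnet N2 N3" using dir N1 N2 by blast
    have "x \<in> events N3" "y \<in> events N3" using N1 N2 N3 unfolding subnet_def by blast+
    moreover have "npost N x = npost N3 x" "npost N y = npost N3 y" using agD[OF N3(1)] calculation by auto
    ultimately show "x = y" using ne good_D(7)[OF good_F[OF N3(1)]] unfolding uprod_def by auto
  qed
  have P3: "\<forall>b\<in>conds N. compo N b < n"
  proof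
    fix b assume "b \<in> conds N"
    then obtain N' where "N' \<in> F" "b \<in> conds N'" using cU by blast
    then show "compo N b < n" using compo_eq good_D(8)[OF good_F] by metis
  qed
  have P4: "inj_on (compo N) (init_mark N)"
  proof (rule inj_onI)
    fix b1 b2 assume b1: "b1 \<in> init_mark N" and b2: "b2 \<in> init_mark N" and eq: "compo N b1 = compo N b2"
    obtain N1 N2 where N1: "N1 \<in> F" "b1 \<in> conds N1" and N2: "N2 \<in> F" "b2 \<in> conds N2"
      using cU b1 b2 unfolding init_mark_def by blast
    obtain N3 where N3: "N3 \<in> F" "subnet N1 N3" "subnet N2 N3" using dir N1 N2 by blast
    have c3: "b1 \<in> conds N3" "b2 \<in> conds N3" using N1 N2 N3 unfolding subnet_def by blast+
    have e3: "events N3 \<subseteq> events N" using eU N3(1) by blast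
    have "b1 \<in> init_mark N3"
      unfolding init_mark_def using c3(1) b1 e3 agD[OF N3(1)] unfolding init_mark_def by blast
    moreover have "b2 \<in> init_mark N3"
      unfolding init_mark_def using c3(2) b2 e3 agD[OF N3(1)] unfolding init_mark_def by blast
    moreover have "compo N3 b1 = compo N3 b2" using eq compo_eq[OF N3(1)] c3 by simp
    ultimately show "b1 = b2" using good_D(9)[OF good_F[OF N3(1)]] by (auto dest: inj_onD)
  qed
  have P5: "\<forall>x. (x,x) \<notin> (Ev N)\<^sup>+"
  proof (intro allI notI)
    fix x assume "(x,x) \<in> (Ev N)\<^sup>+"
    then obtain N' where N': "N' \<in> F" "(x,x) \<in> (Ev N')\<^sup>+" using Ev_trancl_in_F by blast
    then show False using good_D(10)[OF good_F[OF N'(1)]] by blast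
  qed
  have P6: "\<forall>e\<in>events N. \<forall>x\<in>local_conf N e. \<forall>y\<in>local_conf N e. x \<noteq> y \<longrightarrow> npre N x \<inter> npre N y = {}"
  proof (intro ballI impI)
    fix e x y assume e: "e \<in> events N" and x: "x \<in> local_conf N e" and y: "y \<in> local_conf N e"
      and ne: "x \<noteq> y"
    obtain N0 where N0: "N0 \<in> F" "e \<in> events N0" using eU e by blast
    have "x = e \<or> (x,e) \<in> (Ev N)\<^sup>+" using x by (simp add: lc_mem)
    then obtain N1 where N1: "N1 \<in> F" "x = e \<or> (x,e) \<in> (Ev N1)\<^sup>+"
    proof
      assume "x = e" then show ?thesis using that N0(1) by blast
    next
      assume "(x,e) \<in> (Ev N)\<^sup>+"
      then obtain N' where "N' \<in> F" "(x,e) \<in> (Ev N')\<^sup>+" using Ev_trancl_in_F by blast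
      then show ?thesis using that by blast
    qed
    have "y = e \<or> (y,e) \<in> (Ev N)\<^sup>+" using y by (simp add: lc_mem)
    then obtain N2 where N2: "N2 \<in> F" "y = e \<or> (y,e) \<in> (Ev N2)\<^sup>+"
    proof
      assume "y = e" then show ?thesis using that N0(1) by blast
    next
      assume "(y,e) \<in> (Ev N)\<^sup>+"
      then obtain N' where "N' \<in> F" "(y,e) \<in> (Ev N')\<^sup>+" using Ev_trancl_in_F by blast
      then show ?thesis using that by blast
    qed
    obtain N3 where N3: "N3 \<in> F" "subnet N0 N3" "subnet N1 N3" "subnet N2 N3"
      using upper3[OF N0(1) N1(1) N2(1)] by blast
    have e3: "e \<in> events N3" using N0 N3 unfolding subnet_def by blast
    have "x = e \<or> (x,e) \<in> (Ev N3)\<^sup>+" using N1(2) subnet_Ev_trancl[OF N3(3)] by blast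
    then have x3: "x \<in> local_conf N3 e" using e3 unfolding lc_mem by (auto dest: Ev_trancl_events)
    have "y = e \<or> (y,e) \<in> (Ev N3)\<^sup>+" using N2(2) subnet_Ev_trancl[OF N3(4)] by blast
    then have y3: "y \<in> local_conf N3 e" using e3 unfolding lc_mem by (auto dest: Ev_trancl_events)
    have "npre N3 x \<inter> npre N3 y = {}"
      using good_D(11)[OF good_F[OF N3(1)] e3] x3 y3 ne unfolding cfree_def by blast
    moreover have ex: "x \<in> events N3" "y \<in> events N3" using x3 y3 lc_events[of N3 e] by blast+
    moreover have "npre N x = npre N3 x" "npre N y = npre N3 y"
      using agD(1)[OF N3(1) ex(1)] agD(1)[OF N3(1) ex(2)] by simp_all
    ultimately show "npre N x \<inter> npre N y = {}" by simp
  qed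
  show ?thesis unfolding good_def using P1 P2 P3 P4 P5 P6 by (intro conjI) assumption+
qed

end

lemma is_bp_good:
  assumes "is_bp A n N" shows "good n N"
proof -
  obtain F where F: "\<forall>N'\<in>F. fin_bp A n N'"
    "\<forall>N1\<in>F. \<forall>N2\<in>F. \<exists>N3\<in>F. subnet N1 N3 \<and> subnet N2 N3"
    "conds N = (\<Union>N'\<in>F. conds N')" "events N = (\<Union>N'\<in>F. events N')"
    "\<forall>N'\<in>F. agrees N' N"
  proof -
    from assms obtain F where "countable F \<and> F \<noteq> {} \<and> (\<forall>N'\<in>F. fin_bp A n N')
     \<and> (\<forall>N1\<in>F. \<forall>N2\<in>F. \<exists>N3\<in>F. subnet N1 N3 \<and> subnet N2 N3)
     \<and> conds N = (\<Union>N'\<in>F. conds N') \<and> events N = (\<Union>N'\<in>F. events N')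
     \<and> (\<forall>N'\<in>F. agrees N' N)" unfolding is_bp_def by (rule exE)
    then show ?thesis using that by (elim conjE)
  qed
  show ?thesis by (rule good_N[OF F])
qed



theorem lemma1:
  fixes A :: "nat \<Rightarrow> ('a, 's) lts" and n :: nat
    and N :: "('b, 'e, 's) net" and f :: "nat \<Rightarrow> 'e"
  assumes "\<forall>j<n. is_lts (A j)"
    and "is_bp A n N"
    and "\<forall>i. f i \<in> events N"
    and "\<forall>i. ev_lt N (f i) (f (Suc i))"
  shows "\<exists>g :: nat \<Rightarrow> nat. strict_mono g \<and>
           (\<forall>k. strong_cause N (f (g k)) (f (g (Suc k))))"
proof -
  have g: "good n N" by (rule is_bp_good[OF assms(2)])
  have ch: "\<forall>i. (f i, f (Suc i)) \<in> (Ev N)\<^sup>+" using assms(4) unfolding ev_lt_Ev .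
  show ?thesis
  proof (cases "\<forall>i. finite (local_conf N (f i))")
    case True
    interpret chainctx n N f using g assms(3) ch True by unfold_locales
    show ?thesis by (rule finite_case)
  next
    case False
    then obtain i0 where i0: "infinite (local_conf N (f i0))" by blast
    have mono: "local_conf N (f i0) \<subseteq> local_conf N (f (k + i0))" for k
    proof (induction k)
      case 0 then show ?case by simp
    next
      case (Suc k)
      have "local_conf N (f (k + i0)) \<subseteq> local_conf N (f (Suc (k + i0)))"
        by (rule lc_mono2) (use ch in blast)
      then show ?case using Suc by simp
    qed
    have inf: "infinite (local_conf N (f (k + i0)))" for k
    proof
      assume "finite (local_conf N (f (k + i0)))"
      then have "finite (local_conf N (f i0))" using mono[of k] by (rule finite_subset[rotated])
      then show False using i0 by simp
    qed
    have MK: "Mark N (f (k + i0)) = (THE K. False)" for k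
      using Mark_inf[OF inf] .
    have sc: "strong_cause N (f (k + i0)) (f (Suc k + i0))" for k
    proof -
      have "Mark N (f (Suc k + i0)) = Mark N (f (k + i0))" using MK[of k] MK[of "Suc k"] by simp
      moreover have "ev_lt N (f (k + i0)) (f (Suc k + i0))" using assms(4) by simp
      ultimately show ?thesis unfolding strong_cause_def by simp
    qed
    have "strict_mono (\<lambda>k. k + i0)" by (rule strict_monoI) simp
    then show ?thesis using sc by blast
  qed
qed



end
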